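(* Let $d\ge 3$ be fixed and let $\{G_k\}$ be a family of connected $d$-regular simple graphs with $|V(G_k)|\to\infty$ as $k\to\infty$. Then \[ \lim_{k\to\infty}\frac{\mathscr{K}_{nb}(G_k)}{\mathscr{K}_e(G_k)}\le 1-\frac{1}{d^2}. \]
   Context: Kemeny's constant of an irreducible finite Markov chain with transition matrix $P$ whose eigenvalues (with multiplicity) are $1=\rho_1,\rho_2,\dots,\rho_N$ (with $1$ simple) is $\mathscr{K}(P)=\sum_{i=2}^{N}\frac{1}{1-\rho_i}$. Arcs of $G$: for each edge $\{u,v\}$ the two ordered pairs $(u,v),(v,u)$. $\mathscr{K}_e(G)$ is Kemeny's constant of the chain on arcs where from $(u,v)$ one moves to $(v,w)$ with probability $1/\deg(v)$ for each neighbor $w$ of $v$. $\mathscr{K}_{nb}(G)$ is Kemeny's constant of the non-backtracking chain on arcs where from $(u,v)$ one moves to $(v,w)$ with probability $1/(\deg(v)-1)$ for each neighbor $w\neq u$ of $v$. *)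

theory Defs
  imports "Jordan_Normal_Form.Char_Poly" "HOL-Library.Product_Lexorder" "HOL-Library.Extended_Real"
begin

definition simple_graph :: "nat set \<Rightarrow> (nat \<Rightarrow> nat \<Rightarrow> bool) \<Rightarrow> bool" where
  "simple_graph V E \<longleftrightarrow> finite V \<and> (\<forall>u v. E u v \<longrightarrow> u \<in> V \<and> v \<in> V \<and> E v u \<and> u \<noteq> v)"

definition connected_graph :: "nat set \<Rightarrow> (nat \<Rightarrow> nat \<Rightarrow> bool) \<Rightarrow> bool" where
  "connected_graph V E \<longleftrightarrow> V \<noteq> {} \<and> (\<forall>u\<in>V. \<forall>v\<in>V. E\<^sup>*\<^sup>* u v)"

definition deg :: "(nat \<Rightarrow> nat \<Rightarrow> bool) \<Rightarrow> nat \<Rightarrow> nat" where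
  "deg E v = card {w. E v w}"

definition regular :: "nat set \<Rightarrow> (nat \<Rightarrow> nat \<Rightarrow> bool) \<Rightarrow> nat \<Rightarrow> bool" where
  "regular V E d \<longleftrightarrow> (\<forall>v\<in>V. deg E v = d)"

definition arcs :: "nat set \<Rightarrow> (nat \<Rightarrow> nat \<Rightarrow> bool) \<Rightarrow> (nat \<times> nat) set" where
  "arcs V E = {(u, v). u \<in> V \<and> v \<in> V \<and> E u v}"

definition P_edge :: "(nat \<Rightarrow> nat \<Rightarrow> bool) \<Rightarrow> nat \<times> nat \<Rightarrow> nat \<times> nat \<Rightarrow> real" where
  "P_edge E a b = (if snd a = fst b then 1 / real (deg E (snd a)) else 0)"

definition P_nb :: "(nat \<Rightarrow> nat \<Rightarrow> bool) \<Rightarrow> nat \<times> nat \<Rightarrow> nat \<times> nat \<Rightarrow> real" where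
  "P_nb E a b = (if snd a = fst b \<and> snd b \<noteq> fst a
                   then 1 / (real (deg E (snd a)) - 1) else 0)"

definition arc_matrix :: "nat set \<Rightarrow> (nat \<Rightarrow> nat \<Rightarrow> bool)
    \<Rightarrow> (nat \<times> nat \<Rightarrow> nat \<times> nat \<Rightarrow> real) \<Rightarrow> complex mat" where
  "arc_matrix V E Q = (let xs = sorted_list_of_set (arcs V E) in
     mat (length xs) (length xs) (\<lambda>(i, j). complex_of_real (Q (xs ! i) (xs ! j))))"

text \<open>Kemeny's constant: sum over eigenvalues (with algebraic multiplicity) other than the
  simple eigenvalue 1 of 1/(1 - rho). The sum is real for real matrices; we take its real part.\<close>
definition kemeny :: "complex mat \<Rightarrow> real" where
  "kemeny M = Re (\<Sum>\<rho> \<in> {\<rho>. poly (char_poly M) \<rho> = 0} - {1}.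
                    of_nat (order \<rho> (char_poly M)) / (1 - \<rho>))"

definition kemeny_edge :: "nat set \<Rightarrow> (nat \<Rightarrow> nat \<Rightarrow> bool) \<Rightarrow> real" where
  "kemeny_edge V E = kemeny (arc_matrix V E (P_edge E))"

definition kemeny_nb :: "nat set \<Rightarrow> (nat \<Rightarrow> nat \<Rightarrow> bool) \<Rightarrow> real" where
  "kemeny_nb V E = kemeny (arc_matrix V E (P_nb E))"

end

theory Submission
  imports Defs "Jordan_Normal_Form.Jordan_Normal_Form_Uniqueness" "Jordan_Normal_Form.Jordan_Normal_Form_Existence"
begin

definition Sk :: "complex poly \<Rightarrow> complex" where
  "Sk p = (\<Sum>\<rho> \<in> {\<rho>. poly p \<rho> = 0} - {1}. of_nat (Polynomial.order \<rho> p) / (1 - \<rho>))"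

lemma kemeny_Sk: "kemeny M = Re (Sk (char_poly M))"
  unfolding kemeny_def Sk_def by simp

lemma Sk_superset:
  assumes p: "p \<noteq> 0" and F: "finite F" and sub: "{\<rho>. poly p \<rho> = 0} \<subseteq> F"
  shows "Sk p = (\<Sum>\<rho> \<in> F - {1}. of_nat (Polynomial.order \<rho> p) / (1 - \<rho>))"
  unfolding Sk_def
proof (rule sum.mono_neutral_left)
  show "finite (F - {1})" using F by auto
  show "{\<rho>. poly p \<rho> = 0} - {1} \<subseteq> F - {1}" using sub by auto
  show "\<forall>i\<in>F - {1} - ({\<rho>. poly p \<rho> = 0} - {1}). of_nat (Polynomial.order i p) / (1 - i) = 0"
    using p order_root by auto
qed

lemma Sk_mult:
  assumes p: "p \<noteq> 0" and q: "q \<noteq> 0"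
  shows "Sk (p * q) = Sk p + Sk q"
proof -
  let ?F = "{\<rho>. poly p \<rho> = 0} \<union> {\<rho>. poly q \<rho> = 0}"
  have F: "finite ?F" using poly_roots_finite p q by auto
  have pq: "p * q \<noteq> 0" using p q by auto
  have "Sk (p * q) = (\<Sum>\<rho> \<in> ?F - {1}. of_nat (Polynomial.order \<rho> (p*q)) / (1 - \<rho>))"
    by (rule Sk_superset[OF pq F], auto)
  also have "\<dots> = (\<Sum>\<rho> \<in> ?F - {1}. of_nat (Polynomial.order \<rho> p) / (1 - \<rho>) + of_nat (Polynomial.order \<rho> q) / (1 - \<rho>))"
    by (rule sum.cong, simp, simp add: order_mult[OF pq] add_divide_distrib)
  also have "\<dots> = Sk p + Sk q"
    by (simp add: sum.distrib Sk_superset[OF p F] Sk_superset[OF q F])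
  finally show ?thesis .
qed

lemma Sk_linear: "Sk [:-a,1:] = (if a = 1 then 0 else 1 / (1 - a))"
proof -
  have "{\<rho>. poly [:-a,1:] \<rho> = 0} = {a}" by auto
  moreover have "Polynomial.order a [:-a,1:] = 1" using order_power_n_n[of a 1] by simp
  ultimately show ?thesis unfolding Sk_def by auto
qed

lemma Sk_const: "c \<noteq> 0 \<Longrightarrow> Sk [:c:] = 0"
  unfolding Sk_def by simp

lemma Sk_one: "Sk 1 = 0"
  using Sk_const[of 1] by (simp add: one_pCons)

lemma Sk_power: "p \<noteq> 0 \<Longrightarrow> Sk (p ^ j) = of_nat j * Sk p"
  by (induct j) (auto simp: Sk_one Sk_mult algebra_simps)

lemma Sk_prod_list: "(\<And>p. p \<in> set ps \<Longrightarrow> p \<noteq> 0) \<Longrightarrow> Sk (prod_list ps) = sum_list (map Sk ps)"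
proof (induct ps)
  case Nil then show ?case by (simp add: Sk_one)
next
  case (Cons p ps)
  have "prod_list ps \<noteq> 0" using Cons(2) by (auto simp: prod_list_zero_iff)
  then show ?case using Cons by (simp add: Sk_mult)
qed

lemma Sk_monom: "Sk ([:0,1:] ^ j) = of_nat j"
  using Sk_power[of "[:0,1:]" j] Sk_linear[of 0] by simp

lemma Sk_quadratic:
  fixes mu c :: complex
  assumes c: "c \<noteq> 0"
  shows "\<exists>a b. [:1/c, -mu/c, 1:] = [:-a,1:] * [:-b,1:] \<and> a + b = mu / c \<and> a * b = 1 / c"
proof -
  define a where "a = (mu/c + csqrt ((mu/c)^2 - 4/c)) / 2"
  define b where "b = mu/c - a"
  have s: "(csqrt ((mu/c)^2 - 4/c))^2 = (mu/c)^2 - 4/c" by (rule power2_csqrt)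
  have ab: "a * b = 1 / c"
  proof -
    have "a * b = ((mu/c)^2 - (csqrt ((mu/c)^2 - 4/c))^2) / 4"
      unfolding a_def b_def
    proof -
      have "\<And>m s :: complex. (m + s) / 2 * (m - (m + s) / 2) = (m^2 - s^2) / 4"
        by (simp add: field_simps power2_eq_square)
      then show "(mu / c + csqrt ((mu / c)\<^sup>2 - 4 / c)) / 2 * (mu / c - (mu / c + csqrt ((mu / c)\<^sup>2 - 4 / c)) / 2) =
    ((mu / c)\<^sup>2 - (csqrt ((mu / c)\<^sup>2 - 4 / c))\<^sup>2) / 4" .
    qed
    also have "\<dots> = 1 / c" unfolding s using c by (simp add: field_simps)
    finally show ?thesis .
  qed
  have "[:-a,1:] * [:-b,1:] = [:a*b, -(a+b), 1:]" by (simp add: algebra_simps)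
  also have "\<dots> = [:1/c, -mu/c, 1:]" using ab b_def by simp
  finally show ?thesis using ab b_def by (intro exI[of _ a] exI[of _ b]) auto
qed


lemma sum_nth_distinct:
  assumes "distinct xs"
  shows "(\<Sum>j\<in>{0..<length xs}. f (xs ! j)) = (\<Sum>x\<in>set xs. f x)"
proof -
  have "bij_betw ((!) xs) {..<length xs} (set xs)" by (rule bij_betw_nth[OF assms], auto)
  then show ?thesis by (simp add: atLeast0LessThan sum.reindex_bij_betw)
qed

locale rgraph =
  fixes V :: "nat set" and E :: "nat \<Rightarrow> nat \<Rightarrow> bool" and d :: nat
  assumes sg: "simple_graph V E" and conn: "connected_graph V E"
    and reg: "regular V E d" and d3: "d \<ge> 3"
begin

definition "vl = sorted_list_of_set V"
definition "nV = card V"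
definition "al = sorted_list_of_set (arcs V E)"
definition "nA = card (arcs V E)"

lemma finV: "finite V" using sg unfolding simple_graph_def by auto

lemma E_props: assumes "E u v" shows "u \<in> V" "v \<in> V" "E v u" "u \<noteq> v"
  using sg assms unfolding simple_graph_def by auto

lemma arcs_eq: "arcs V E = {(u,v). E u v}"
  unfolding arcs_def using E_props by auto

lemma fin_arcs: "finite (arcs V E)"
proof -
  have "arcs V E \<subseteq> V \<times> V" unfolding arcs_def by auto
  then show ?thesis using finV finite_subset by blast
qed

lemma nbr_sub: "{w. E v w} \<subseteq> V" using E_props by auto
lemma fin_nbr: "finite {w. E v w}" using nbr_sub finV finite_subset by blast

lemma deg_d: "v \<in> V \<Longrightarrow> card {w. E v w} = d"
  using reg unfolding regular_def deg_def by auto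

lemma vl_props: "distinct vl" "set vl = V" "length vl = nV"
  unfolding vl_def nV_def using finV by auto

lemma al_props: "distinct al" "set al = arcs V E" "length al = nA"
  unfolding al_def nA_def using fin_arcs by auto

lemma sum_vl: "(\<Sum>j\<in>{0..<nV}. f (vl ! j)) = (\<Sum>x\<in>V. f x)"
  using sum_nth_distinct[OF vl_props(1), of f] vl_props by simp

lemma sum_al: "(\<Sum>j\<in>{0..<nA}. f (al ! j)) = (\<Sum>x\<in>arcs V E. f x)"
  using sum_nth_distinct[OF al_props(1), of f] al_props by simp

lemma vl_in: "j < nV \<Longrightarrow> vl ! j \<in> V" using vl_props nth_mem by metis
lemma al_in: "j < nA \<Longrightarrow> al ! j \<in> arcs V E" using al_props nth_mem by metis
lemma al_E: "j < nA \<Longrightarrow> E (fst (al ! j)) (snd (al ! j))"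
  using al_in[of j] unfolding arcs_eq by (cases "al ! j") auto

lemma vl_inj: "i < nV \<Longrightarrow> j < nV \<Longrightarrow> vl ! i = vl ! j \<longleftrightarrow> i = j"
  using vl_props nth_eq_iff_index_eq by metis
lemma al_inj: "i < nA \<Longrightarrow> j < nA \<Longrightarrow> al ! i = al ! j \<longleftrightarrow> i = j"
  using al_props nth_eq_iff_index_eq by metis

lemma delta_vl: "(\<Sum>j\<in>{0..<nV}. if vl ! j = u then c else 0) = (if u \<in> V then c else (0::'a::comm_monoid_add))"
  unfolding sum_vl[of "\<lambda>x. if x = u then c else 0"] using finV by simp

lemma delta_al: "(\<Sum>j\<in>{0..<nA}. if al ! j = u then c else 0) = (if u \<in> arcs V E then c else (0::'a::comm_monoid_add))"
  unfolding sum_al[of "\<lambda>x. if x = u then c else 0"] using fin_arcs by simp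

lemma nA_eq: "nA = nV * d"
proof -
  have "nA = card (\<Union>v\<in>V. {(v,w) | w. E v w})"
    unfolding nA_def arcs_eq by (rule arg_cong[where f=card], auto intro: E_props)
  also have "\<dots> = (\<Sum>v\<in>V. card {(v,w) | w. E v w})"
    by (rule card_UN_disjoint[OF finV], auto intro: finite_subset[OF _ fin_arcs] simp: arcs_eq)
  also have "\<dots> = (\<Sum>v\<in>V. d)"
  proof (rule sum.cong[OF refl])
    fix v assume v: "v \<in> V"
    have "card {(v,w) | w. E v w} = card (Pair v ` {w. E v w})" by (rule arg_cong[where f=card], auto)
    also have "\<dots> = card {w. E v w}" by (rule card_image, auto simp: inj_on_def)
    finally show "card {(v,w) | w. E v w} = d" using deg_d[OF v] by simp
  qed
  finally show ?thesis unfolding nV_def by simp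
qed

end

lemma mult_entry:
  assumes "A \<in> carrier_mat n m" "B \<in> carrier_mat m p" "i < n" "j < p"
  shows "(A * B) $$ (i,j) = (\<Sum>c\<in>{0..<m}. A $$ (i,c) * B $$ (c,j))"
  using assms by (simp add: scalar_prod_def)

context rgraph begin

definition Am :: "complex mat" where "Am = mat nV nV (\<lambda>(i,j). if E (vl!i) (vl!j) then 1 else 0)"
definition Qm :: "complex mat" where "Qm = mat nA nV (\<lambda>(a,w). if snd (al!a) = vl!w then 1 else 0)"
definition Rm :: "complex mat" where "Rm = mat nV nA (\<lambda>(w,a). if fst (al!a) = vl!w then 1 else 0)"
definition Jm :: "complex mat" where "Jm = mat nA nA (\<lambda>(a,b). if al!b = prod.swap (al!a) then 1 else 0)"
definition sgn_arc :: "nat \<times> nat \<Rightarrow> complex" where "sgn_arc x = (if fst x < snd x then 1 else -1)"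
definition Sm :: "complex mat" where "Sm = mat nA nA (\<lambda>(a,b). if a = b then sgn_arc (al!a) else 0)"

lemma Am_c[simp]: "Am \<in> carrier_mat nV nV" unfolding Am_def by auto
lemma Qm_c[simp]: "Qm \<in> carrier_mat nA nV" unfolding Qm_def by auto
lemma Rm_c[simp]: "Rm \<in> carrier_mat nV nA" unfolding Rm_def by auto
lemma Jm_c[simp]: "Jm \<in> carrier_mat nA nA" unfolding Jm_def by auto
lemma Sm_c[simp]: "Sm \<in> carrier_mat nA nA" unfolding Sm_def by auto

lemma swap_arc: "x \<in> arcs V E \<Longrightarrow> prod.swap x \<in> arcs V E"
  unfolding arcs_eq using E_props by (cases x) auto

lemma QR: "Qm * Rm = mat nA nA (\<lambda>(a,b). if snd (al!a) = fst (al!b) then 1 else 0)"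
proof (rule eq_matI)
  fix a b assume a: "a < dim_row (mat nA nA (\<lambda>(a,b). if snd (al!a) = fst (al!b) then 1 else (0::complex)))"
    and b: "b < dim_col (mat nA nA (\<lambda>(a,b). if snd (al!a) = fst (al!b) then 1 else (0::complex)))"
  then have a: "a < nA" and b: "b < nA" by auto
  have "(Qm * Rm) $$ (a,b) = (\<Sum>w\<in>{0..<nV}. if vl ! w = snd (al!a) then (if snd (al!a) = fst (al!b) then 1 else 0) else 0)"
    using a b unfolding Qm_def Rm_def by (auto simp: scalar_prod_def intro!: sum.cong)
  also have "\<dots> = (if snd (al!a) = fst (al!b) then 1 else 0)"
    unfolding delta_vl using E_props(2)[OF al_E[OF a]] by simp
  finally show "(Qm * Rm) $$ (a,b) = mat nA nA (\<lambda>(a,b). if snd (al!a) = fst (al!b) then 1 else 0) $$ (a,b)"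
    using a b by simp
qed (auto simp: Qm_def Rm_def)

lemma RQ: "Rm * Qm = Am"
proof (rule eq_matI)
  fix i j assume i: "i < dim_row Am" and j: "j < dim_col Am"
  then have i: "i < nV" and j: "j < nV" by (auto simp: Am_def)
  have "(Rm * Qm) $$ (i,j) = (\<Sum>a\<in>{0..<nA}. if al ! a = (vl!i, vl!j) then 1 else 0)"
    using i j unfolding Qm_def Rm_def by (auto simp: scalar_prod_def prod_eq_iff intro!: sum.cong split: prod.splits)
  also have "\<dots> = Am $$ (i,j)"
    unfolding delta_al using i j by (simp add: Am_def arcs_def vl_in)
  finally show "(Rm * Qm) $$ (i,j) = Am $$ (i,j)" .
qed (auto simp: Qm_def Rm_def Am_def)

lemma RJ: "Rm * Jm = mat nV nA (\<lambda>(w,b). if snd (al!b) = vl!w then 1 else 0)"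
proof (rule eq_matI)
  fix w b assume w: "w < dim_row (mat nV nA (\<lambda>(w,b). if snd (al!b) = vl!w then 1 else (0::complex)))"
    and b: "b < dim_col (mat nV nA (\<lambda>(w,b). if snd (al!b) = vl!w then 1 else (0::complex)))"
  then have w: "w < nV" and b: "b < nA" by auto
  have t: "\<And>a. (if fst (al!a) = vl!w then 1 else 0) * (if al!b = prod.swap (al!a) then 1 else 0) = (if al!a = prod.swap(al!b) then (if snd (al!b) = vl!w then 1 else 0) else (0::complex))"
    by (auto simp: prod_eq_iff)
  have "(Rm * Jm) $$ (w,b) = (\<Sum>a\<in>{0..<nA}. if al ! a = prod.swap (al!b) then (if snd (al!b) = vl!w then 1 else 0) else 0)"
    using w b unfolding Jm_def Rm_def by (auto simp: scalar_prod_def t intro!: sum.cong)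
  also have "\<dots> = (if snd (al!b) = vl!w then 1 else 0)"
    unfolding delta_al using swap_arc[OF al_in[OF b]] by simp
  finally show "(Rm * Jm) $$ (w,b) = mat nV nA (\<lambda>(w,b). if snd (al!b) = vl!w then 1 else 0) $$ (w,b)"
    using w b by simp
qed (auto simp: Jm_def Rm_def)

lemma card_in_arcs: assumes v: "v \<in> V" shows "card {x \<in> arcs V E. snd x = v} = d"
proof -
  have "{x \<in> arcs V E. snd x = v} = (\<lambda>u. (u,v)) ` {u. E v u}"
    unfolding arcs_eq using E_props by auto
  also have "card \<dots> = card {u. E v u}" by (rule card_image, auto simp: inj_on_def)
  finally show ?thesis using deg_d[OF v] by simp
qed

lemma RJQ: "Rm * Jm * Qm = of_nat d \<cdot>\<^sub>m 1\<^sub>m nV"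
proof (rule eq_matI)
  fix i j assume i: "i < dim_row (of_nat d \<cdot>\<^sub>m 1\<^sub>m nV :: complex mat)" and j: "j < dim_col (of_nat d \<cdot>\<^sub>m 1\<^sub>m nV :: complex mat)"
  then have i: "i < nV" and j: "j < nV" by auto
  have "(Rm * Jm * Qm) $$ (i,j) = (\<Sum>b\<in>{0..<nA}. if snd (al ! b) = vl!i \<and> i = j then 1 else 0)"
    using i j unfolding RJ Qm_def by (auto simp: scalar_prod_def vl_inj intro!: sum.cong)
  also have "\<dots> = (\<Sum>x\<in>arcs V E. if snd x = vl!i \<and> i = j then 1 else 0)"
    by (rule sum_al)
  also have "\<dots> = (if i = j then of_nat (card {x \<in> arcs V E. snd x = vl!i}) else 0)"
    using fin_arcs by (simp add: sum.If_cases Collect_conj_eq Int_commute)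
  also have "\<dots> = (of_nat d \<cdot>\<^sub>m 1\<^sub>m nV :: complex mat) $$ (i,j)"
    using i j card_in_arcs[OF vl_in[OF i]] by (cases "i = j") auto
  finally show "(Rm * Jm * Qm) $$ (i,j) = (of_nat d \<cdot>\<^sub>m 1\<^sub>m nV :: complex mat) $$ (i,j)" .
qed (auto simp: Qm_def Rm_def)

lemma JJ: "Jm * Jm = 1\<^sub>m nA"
proof (rule eq_matI)
  fix a b assume a: "a < dim_row (1\<^sub>m nA :: complex mat)" and b: "b < dim_col (1\<^sub>m nA :: complex mat)"
  then have a: "a < nA" and b: "b < nA" by auto
  have "(Jm * Jm) $$ (a,b) = (\<Sum>c\<in>{0..<nA}. if al ! c = prod.swap (al!a) then (if al!b = al!a then 1 else 0) else 0)"
    using a b unfolding Jm_def by (auto simp: scalar_prod_def intro!: sum.cong split: prod.splits)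
  also have "\<dots> = (if al!b = al!a then 1 else 0)"
    unfolding delta_al using swap_arc[OF al_in[OF a]] by simp
  also have "\<dots> = (1\<^sub>m nA :: complex mat) $$ (a,b)" using a b al_inj[OF a b] by auto
  finally show "(Jm * Jm) $$ (a,b) = (1\<^sub>m nA :: complex mat) $$ (a,b)" .
qed (auto simp: Jm_def)

lemma sgn_arc_sq: "sgn_arc x * sgn_arc x = 1" unfolding sgn_arc_def by auto

lemma SS: "Sm * Sm = 1\<^sub>m nA"
proof (rule eq_matI)
  fix a b assume a: "a < dim_row (1\<^sub>m nA :: complex mat)" and b: "b < dim_col (1\<^sub>m nA :: complex mat)"
  then have a: "a < nA" and b: "b < nA" by auto
  have t: "Sm $$ (a,c) * Sm $$ (c,b) = (if c = a then (if a = b then 1 else 0) else 0)" if "c < nA" for c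
    using a b that unfolding Sm_def by (auto simp: sgn_arc_sq)
  have "(Sm * Sm) $$ (a,b) = (\<Sum>c\<in>{0..<nA}. Sm $$ (a,c) * Sm $$ (c,b))"
    using a b by (simp add: scalar_prod_def Sm_def)
  also have "\<dots> = (\<Sum>c\<in>{0..<nA}. if c = a then (if a = b then 1 else 0) else 0)"
    by (rule sum.cong, auto simp: t)
  also have "\<dots> = (1\<^sub>m nA :: complex mat) $$ (a,b)" using a b by auto
  finally show "(Sm * Sm) $$ (a,b) = (1\<^sub>m nA :: complex mat) $$ (a,b)" .
qed (auto simp: Sm_def)

lemma SJS: "Sm * Jm * Sm = - Jm"
proof (rule eq_matI)
  fix a b assume a: "a < dim_row (- Jm)" and b: "b < dim_col (- Jm)"
  then have a: "a < nA" and b: "b < nA" by (auto simp: Jm_def)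
  have SJ: "(Sm * Jm) $$ (a,c) = sgn_arc (al!a) * Jm $$ (a,c)" if c: "c < nA" for c
  proof -
    have t: "Sm $$ (a,e) * Jm $$ (e,c) = (if e = a then sgn_arc (al!a) * Jm $$ (a,c) else 0)" if "e < nA" for e
      using a that unfolding Sm_def by auto
    have "(Sm * Jm) $$ (a,c) = (\<Sum>e\<in>{0..<nA}. Sm $$ (a,e) * Jm $$ (e,c))"
      using a c by (simp add: scalar_prod_def Sm_def Jm_def)
    also have "\<dots> = (\<Sum>e\<in>{0..<nA}. if e = a then sgn_arc (al!a) * Jm $$ (a,c) else 0)"
      by (rule sum.cong, auto simp: t)
    finally show ?thesis using a by simp
  qed
  have t: "(Sm * Jm) $$ (a,c) * Sm $$ (c,b) = (if c = b then sgn_arc (al!a) * Jm $$ (a,b) * sgn_arc (al!b) else 0)" if "c < nA" for c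
    using a b that SJ[OF that] unfolding Sm_def by auto
  have "(Sm * Jm * Sm) $$ (a,b) = (\<Sum>c\<in>{0..<nA}. (Sm * Jm) $$ (a,c) * Sm $$ (c,b))"
    by (rule mult_entry[of _ nA nA], insert a b, auto intro!: mult_carrier_mat[of _ nA nA])
  also have "\<dots> = (\<Sum>c\<in>{0..<nA}. if c = b then sgn_arc (al!a) * Jm $$ (a,b) * sgn_arc (al!b) else 0)"
    by (rule sum.cong, auto simp: t)
  also have "\<dots> = sgn_arc (al!a) * Jm $$ (a,b) * sgn_arc (al!b)" using b by simp
  also have "\<dots> = (- Jm) $$ (a,b)"
  proof (cases "al!b = prod.swap (al!a)")
    case True
    have "fst (al!a) \<noteq> snd (al!a)" using E_props(4)[OF al_E[OF a]] .
    then show ?thesis using True a b unfolding Jm_def sgn_arc_def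
      by (cases "al!a") auto
  next
    case False then show ?thesis using a b unfolding Jm_def by auto
  qed
  finally show "(Sm * Jm * Sm) $$ (a,b) = (- Jm) $$ (a,b)" .
qed (auto simp: Sm_def Jm_def)

lemma deg_snd: "j < nA \<Longrightarrow> deg E (snd (al!j)) = d"
  using deg_d E_props(2)[OF al_E] unfolding deg_def by blast

lemma deg_fst: "j < nA \<Longrightarrow> deg E (fst (al!j)) = d"
  using deg_d E_props(1)[OF al_E] unfolding deg_def by blast

lemma arc_edge: "arc_matrix V E (P_edge E) = (1 / of_nat d) \<cdot>\<^sub>m (Qm * Rm)"
  unfolding arc_matrix_def Let_def al_def[symmetric] QR
  by (rule eq_matI, auto simp: al_props P_edge_def deg_snd deg_fst)

lemma arc_nb: "arc_matrix V E (P_nb E) = (1 / (of_nat d - 1)) \<cdot>\<^sub>m (Qm * Rm - Jm)"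
proof -
  have QRJ: "Qm * Rm - Jm = mat nA nA (\<lambda>(a,b). if snd (al!a) = fst (al!b) \<and> snd (al!b) \<noteq> fst (al!a) then 1 else 0)"
    unfolding QR Jm_def by (rule eq_matI, auto simp: prod_eq_iff)
  show ?thesis
    unfolding arc_matrix_def Let_def al_def[symmetric] QRJ
    by (rule eq_matI, auto simp: al_props P_nb_def deg_snd deg_fst)
qed

end

lemma poly_char:
  fixes M :: "'a :: field mat"
  assumes M: "M \<in> carrier_mat N N"
  shows "poly (char_poly M) x = det (x \<cdot>\<^sub>m 1\<^sub>m N - M)"
proof -
  have "- char_matrix M x = x \<cdot>\<^sub>m 1\<^sub>m N - M"
    unfolding char_matrix_def using M by (intro eq_matI) auto
  then show ?thesis using char_poly_matrix[OF M, of x] by simp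
qed

lemma sylvester:
  fixes X :: "'a :: idom mat"
  assumes X: "X \<in> carrier_mat k n" and Y: "Y \<in> carrier_mat n k"
  shows "det (1\<^sub>m k - X * Y) = det (1\<^sub>m n - Y * X)"
proof -
  define M where "M = four_block_mat (1\<^sub>m k) X Y (1\<^sub>m n)"
  define L where "L = four_block_mat (1\<^sub>m k) (0\<^sub>m k n) (- Y) (1\<^sub>m n)"
  have Mc: "M \<in> carrier_mat (k+n) (k+n)" unfolding M_def using X Y by auto
  have Lc: "L \<in> carrier_mat (k+n) (k+n)" unfolding L_def using X Y by auto
  have XY: "X * Y \<in> carrier_mat k k" "Y * X \<in> carrier_mat n n" using X Y by auto
  have detL: "det L = 1" unfolding L_def
    by (subst det_four_block_mat_upper_right_zero[of _ k _ n], insert Y, auto)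
  have lMm: "L * M = four_block_mat (1\<^sub>m k) X (0\<^sub>m n k) (1\<^sub>m n - Y * X)"
  proof -
    have "L * M = four_block_mat (1\<^sub>m k * 1\<^sub>m k + 0\<^sub>m k n * Y) (1\<^sub>m k * X + 0\<^sub>m k n * 1\<^sub>m n)
       (- Y * 1\<^sub>m k + 1\<^sub>m n * Y) (- Y * X + 1\<^sub>m n * 1\<^sub>m n)"
      unfolding L_def M_def by (rule mult_four_block_mat, insert X Y, auto)
    also have "\<dots> = four_block_mat (1\<^sub>m k) X (0\<^sub>m n k) (1\<^sub>m n - Y * X)"
    proof -
      have "1\<^sub>m k * 1\<^sub>m k + 0\<^sub>m k n * Y = 1\<^sub>m k" using Y by (intro eq_matI, auto)
      moreover have "1\<^sub>m k * X + 0\<^sub>m k n * 1\<^sub>m n = X" using X by (intro eq_matI, auto)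
      moreover have "- Y * 1\<^sub>m k + 1\<^sub>m n * Y = 0\<^sub>m n k" using Y by (intro eq_matI, auto)
      moreover have "- Y * X + 1\<^sub>m n * 1\<^sub>m n = 1\<^sub>m n - Y * X" using XY X Y by (intro eq_matI, auto)
      ultimately show ?thesis by simp
    qed
    finally show ?thesis .
  qed
  have mLm: "M * L = four_block_mat (1\<^sub>m k - X * Y) X (0\<^sub>m n k) (1\<^sub>m n)"
  proof -
    have "M * L = four_block_mat (1\<^sub>m k * 1\<^sub>m k + X * (- Y)) (1\<^sub>m k * 0\<^sub>m k n + X * 1\<^sub>m n)
       (Y * 1\<^sub>m k + 1\<^sub>m n * (- Y)) (Y * 0\<^sub>m k n + 1\<^sub>m n * 1\<^sub>m n)"
      unfolding L_def M_def by (rule mult_four_block_mat, insert X Y, auto)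
    also have "\<dots> = four_block_mat (1\<^sub>m k - X * Y) X (0\<^sub>m n k) (1\<^sub>m n)"
    proof -
      have "1\<^sub>m k * 1\<^sub>m k + X * (- Y) = 1\<^sub>m k - X * Y" using XY X Y by (intro eq_matI, auto)
      moreover have "1\<^sub>m k * 0\<^sub>m k n + X * 1\<^sub>m n = X" using X by (intro eq_matI, auto)
      moreover have "Y * 1\<^sub>m k + 1\<^sub>m n * (- Y) = 0\<^sub>m n k" using Y by (intro eq_matI, auto)
      moreover have "Y * 0\<^sub>m k n + 1\<^sub>m n * 1\<^sub>m n = 1\<^sub>m n" using Y by (intro eq_matI, auto)
      ultimately show ?thesis by simp
    qed
    finally show ?thesis .
  qed
  have "det (1\<^sub>m k - X * Y) = det (M * L)"
    unfolding mLm by (subst det_four_block_mat_lower_left_zero[of _ k _ n], insert X Y XY, auto)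
  also have "\<dots> = det (L * M)" using det_mult[OF Mc Lc] det_mult[OF Lc Mc] by (simp add: mult.commute)
  also have "\<dots> = det (1\<^sub>m n - Y * X)"
    unfolding lMm by (subst det_four_block_mat_lower_left_zero[of _ k _ n], insert X Y XY, auto)
  finally show ?thesis .
qed


context rgraph begin

definition idx :: "nat \<Rightarrow> nat" where "idx u = (THE i. i < nV \<and> vl ! i = u)"

lemma idx_spec: assumes "u \<in> V" shows "idx u < nV" "vl ! idx u = u"
proof -
  obtain i where i: "i < nV" "vl ! i = u" using assms vl_props by (metis in_set_conv_nth)
  have "idx u = i" unfolding idx_def by (rule the_equality, insert i vl_inj, auto)
  then show "idx u < nV" "vl ! idx u = u" using i by auto
qed

lemma idx_vl: "j < nV \<Longrightarrow> idx (vl ! j) = j"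
  using idx_spec[OF vl_in] vl_inj by metis

lemma V_ne: "V \<noteq> {}" using conn unfolding connected_graph_def by auto
lemma nV_pos: "nV > 0" using V_ne finV unfolding nV_def by auto

lemma maxp:
  fixes x :: "nat \<Rightarrow> real"
  assumes eq: "\<And>i. i < nV \<Longrightarrow> real d * x i = (\<Sum>j\<in>{0..<nV}. if E (vl!i) (vl!j) then x j else 0)"
    and i: "i < nV" and j: "j < nV"
  shows "x i = x j"
proof -
  define X where "X u = x (idx u)" for u
  have eqV: "real d * X u = (\<Sum>w\<in>{w. E u w}. X w)" if u: "u \<in> V" for u
  proof -
    have "real d * X u = (\<Sum>j\<in>{0..<nV}. (\<lambda>w. if E u w then X w else 0) (vl ! j))"
    proof -
      have "(\<Sum>j = 0..<nV. if E u (vl ! j) then x j else 0) =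
         (\<Sum>j = 0..<nV. if E u (vl ! j) then x (idx (vl ! j)) else 0)"
        by (rule sum.cong, simp, simp add: idx_vl)
      then show ?thesis unfolding X_def using eq[OF idx_spec(1)[OF u]] idx_spec(2)[OF u] by simp
    qed
    also have "\<dots> = (\<Sum>w\<in>V. if E u w then X w else 0)" by (rule sum_vl)
    also have "\<dots> = (\<Sum>w\<in>{w. E u w}. X w)"
      using finV nbr_sub by (simp add: sum.If_cases Collect_conj_eq Int_absorb1 Int_commute)
    finally show ?thesis .
  qed
  define M where "M = Max (X ` V)"
  have M: "M \<in> X ` V" unfolding M_def using finV V_ne by auto
  then obtain u0 where u0: "u0 \<in> V" "X u0 = M" by auto
  have le: "X u \<le> M" if "u \<in> V" for u unfolding M_def using finV that by auto
  have stepM: "X w = M" if "X u = M" "u \<in> V" "E u w" for u w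
  proof -
    have "(\<Sum>w\<in>{w. E u w}. M - X w) = real d * M - real d * X u"
      using eqV[OF that(2)] deg_d[OF that(2)] by (simp add: sum_subtractf)
    then have "(\<Sum>w\<in>{w. E u w}. M - X w) = 0" using that by simp
    moreover have "\<forall>w\<in>{w. E u w}. 0 \<le> M - X w" using le E_props by auto
    ultimately have "\<forall>w\<in>{w. E u w}. M - X w = 0"
      using sum_nonneg_eq_0_iff[OF fin_nbr[of u], of "\<lambda>w. M - X w"] by simp
    then show ?thesis using that by auto
  qed
  have reach: "X v = M" if "E\<^sup>*\<^sup>* u0 v" for v
    using that
  proof (induct rule: rtranclp_induct)
    case base then show ?case using u0 by simp
  next
    case (step y z)
    have "y \<in> V" using step(2) E_props by auto
    then show ?case using stepM step(2,3) by blast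
  qed
  have "X u = M" if "u \<in> V" for u
    using reach conn u0(1) that unfolding connected_graph_def by blast
  then have "x (idx (vl!i)) = M" "x (idx (vl!j)) = M" using vl_in[OF i] vl_in[OF j] unfolding X_def by auto
  then show ?thesis by (simp add: idx_vl i j)
qed

end

context rgraph begin

lemma Am_entry: "i < nV \<Longrightarrow> j < nV \<Longrightarrow> Am $$ (i,j) = (if E (vl!i) (vl!j) then 1 else 0)"
  unfolding Am_def by simp

lemma Am_mulv: "v \<in> carrier_vec nV \<Longrightarrow> i < nV \<Longrightarrow>
   (Am *\<^sub>v v) $ i = (\<Sum>j\<in>{0..<nV}. if E (vl!i) (vl!j) then v $ j else 0)"
  unfolding Am_def by (auto simp: mult_mat_vec_def scalar_prod_def intro!: sum.cong)

lemma rowsum: "i < nV \<Longrightarrow> (\<Sum>j\<in>{0..<nV}. if E (vl!i) (vl!j) then (1::'a::comm_semiring_1) else 0) = of_nat d"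
proof -
  assume i: "i < nV"
  have "(\<Sum>j\<in>{0..<nV}. if E (vl!i) (vl!j) then (1::'a) else 0) = (\<Sum>w\<in>V. if E (vl!i) w then 1 else 0)"
    by (rule sum_vl)
  also have "\<dots> = of_nat (card {w. E (vl!i) w})"
    using finV nbr_sub by (simp add: sum.If_cases Collect_conj_eq Int_absorb1 Int_commute)
  finally show ?thesis using deg_d[OF vl_in[OF i]] by simp
qed

definition ones :: "complex vec" where "ones = vec nV (\<lambda>_. 1)"

lemma ones_c[simp]: "ones \<in> carrier_vec nV" unfolding ones_def by simp

lemma ones_eig: "Am *\<^sub>v ones = of_nat d \<cdot>\<^sub>v ones"
proof (rule eq_vecI)
  fix i assume "i < dim_vec (of_nat d \<cdot>\<^sub>v ones)"
  then have i: "i < nV" by (simp add: ones_def)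
  have "(Am *\<^sub>v ones) $ i = (\<Sum>j\<in>{0..<nV}. if E (vl!i) (vl!j) then 1 else 0)"
    unfolding Am_mulv[OF ones_c i] unfolding ones_def by (rule sum.cong, auto)
  also have "\<dots> = of_nat d" by (rule rowsum[OF i])
  finally show "(Am *\<^sub>v ones) $ i = (of_nat d \<cdot>\<^sub>v ones) $ i" using i by (simp add: ones_def)
qed (simp add: ones_def Am_def)

lemma kernel_const:
  assumes v: "v \<in> carrier_vec nV" and ev: "Am *\<^sub>v v = of_nat d \<cdot>\<^sub>v v"
  shows "v = v $ 0 \<cdot>\<^sub>v ones"
proof -
  have eq: "of_nat d * v $ i = (\<Sum>j\<in>{0..<nV}. if E (vl!i) (vl!j) then v $ j else 0)" if i: "i < nV" for i
  proof -
    have "(of_nat d \<cdot>\<^sub>v v) $ i = (Am *\<^sub>v v) $ i" using ev by simp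
    then show ?thesis using Am_mulv[OF v i] v i by simp
  qed
  have reif: "\<And>P a. Re (if P then a else 0) = (if P then Re a else 0)" by auto
  have imif: "\<And>P a. Im (if P then a else 0) = (if P then Im a else 0)" by auto
  have re: "real d * Re (v $ i) = (\<Sum>j\<in>{0..<nV}. if E (vl!i) (vl!j) then Re (v $ j) else 0)" if i: "i < nV" for i
    using arg_cong[OF eq[OF i], of Re] by (simp add: Re_sum reif)
  have im: "real d * Im (v $ i) = (\<Sum>j\<in>{0..<nV}. if E (vl!i) (vl!j) then Im (v $ j) else 0)" if i: "i < nV" for i
    using arg_cong[OF eq[OF i], of Im] by (simp add: Im_sum imif)
  have c0: "v $ i = v $ 0" if i: "i < nV" for i
    using maxp[of "\<lambda>i. Re (v $ i)", OF re i nV_pos] maxp[of "\<lambda>i. Im (v $ i)", OF im i nV_pos]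
    by (simp add: complex_eqI)
  show ?thesis
  proof (rule eq_vecI)
    fix i assume "i < dim_vec (v $ 0 \<cdot>\<^sub>v ones)"
    then have i: "i < nV" by (simp add: ones_def)
    have "(v $ 0 \<cdot>\<^sub>v ones) $ i = v $ 0" using i by (simp add: ones_def)
    then show "v $ i = (v $ 0 \<cdot>\<^sub>v ones) $ i" using c0[OF i] by simp
  qed (use v in \<open>simp add: ones_def\<close>)
qed

end

definition mtr :: "'a::comm_ring_1 mat \<Rightarrow> 'a" where "mtr M = (\<Sum>i\<in>{0..<dim_row M}. M $$ (i,i))"

lemma mtr_comm:
  assumes X: "X \<in> carrier_mat n m" and Y: "Y \<in> carrier_mat m n"
  shows "mtr (X * Y) = mtr (Y * X)"
proof -
  have "mtr (X * Y) = (\<Sum>i\<in>{0..<n}. \<Sum>c\<in>{0..<m}. X $$ (i,c) * Y $$ (c,i))"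
    unfolding mtr_def using X Y mult_entry[OF X Y] by (intro sum.cong) auto
  also have "\<dots> = (\<Sum>c\<in>{0..<m}. \<Sum>i\<in>{0..<n}. Y $$ (c,i) * X $$ (i,c))"
    by (subst sum.swap) (simp add: mult.commute)
  also have "\<dots> = mtr (Y * X)"
    unfolding mtr_def using X Y mult_entry[OF Y X] by (intro sum.cong) auto
  finally show ?thesis .
qed

lemma mtr_diag: "mtr B = sum_list (diag_mat B)"
  unfolding mtr_def diag_mat_def by (simp add: interv_sum_list_conv_sum_set_nat)

lemma schur_trace:
  fixes A :: "complex mat"
  assumes A: "A \<in> carrier_mat n n" and c: "char_poly A = (\<Prod>e\<leftarrow>es. [:- e, 1:])"
  shows "sum_list es = mtr A"
proof -
  obtain B P Q where sd: "schur_decomposition A es = (B,P,Q)" by (cases "schur_decomposition A es") auto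
  from schur_decomposition[OF A c sd] have w: "similar_mat_wit A B P Q" and dg: "diag_mat B = es" by auto
  from w A have Bc: "B \<in> carrier_mat n n" and Pc: "P \<in> carrier_mat n n" and Qc: "Q \<in> carrier_mat n n"
    and PQ: "P * Q = 1\<^sub>m n" and AA: "A = P * B * Q"
    unfolding similar_mat_wit_def Let_def by auto
  have "mtr A = mtr ((P * B) * Q)" using AA by simp
  also have "\<dots> = mtr (Q * (P * B))" by (rule mtr_comm, insert Pc Bc Qc, auto)
  also have "Q * (P * B) = (Q * P) * B" using Pc Bc Qc by (simp add: assoc_mult_mat)
  also have "Q * P = 1\<^sub>m n" using w A unfolding similar_mat_wit_def Let_def by auto
  also have "1\<^sub>m n * B = B" using Bc by simp
  finally show ?thesis unfolding mtr_diag dg by simp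
qed

context rgraph begin

lemma mtr_Am: "mtr Am = 0"
  unfolding mtr_def by (auto simp: Am_def intro!: sum.neutral dest: E_props(4))

lemma eig_props:
  assumes v: "v \<in> carrier_vec nV" and v0: "v \<noteq> 0\<^sub>v nV" and ev: "Am *\<^sub>v v = lam \<cdot>\<^sub>v v"
  shows "Im lam = 0" "cmod lam \<le> real d"
proof -
  have eq: "lam * v $ i = (\<Sum>j\<in>{0..<nV}. if E (vl!i) (vl!j) then v $ j else 0)" if i: "i < nV" for i
  proof -
    have "(lam \<cdot>\<^sub>v v) $ i = (Am *\<^sub>v v) $ i" using ev by simp
    then show ?thesis using Am_mulv[OF v i] v i by simp
  qed
  obtain i1 where i1: "i1 < nV" "v $ i1 \<noteq> 0" using v v0 by (metis eq_vecI carrier_vecD index_zero_vec)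
  define s where "s = (\<Sum>i\<in>{0..<nV}. \<Sum>j\<in>{0..<nV}. if E (vl!i) (vl!j) then cnj (v $ i) * v $ j else 0)"
  define N where "N = (\<Sum>i\<in>{0..<nV}. (cmod (v $ i))^2)"
  have Npos: "N > 0"
  proof -
    have "(cmod (v $ i1))^2 \<le> N" unfolding N_def
      by (rule member_le_sum, insert i1, auto)
    moreover have "(cmod (v $ i1))^2 > 0" using i1 by simp
    ultimately show ?thesis by linarith
  qed
  have s1: "s = lam * of_real N"
  proof -
    have "s = (\<Sum>i\<in>{0..<nV}. cnj (v $ i) * (lam * v $ i))"
    proof (unfold s_def, rule sum.cong, simp)
      fix i assume "i \<in> {0..<nV}"
      then have i: "i < nV" by simp
      have ifm: "\<And>P a. cnj (v $ i) * (if P then a else 0) = (if P then cnj (v $ i) * a else 0)" by simp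
      show "(\<Sum>j\<in>{0..<nV}. if E (vl!i) (vl!j) then cnj (v $ i) * v $ j else 0) = cnj (v $ i) * (lam * v $ i)"
        unfolding eq[OF i] sum_distrib_left ifm ..
    qed
    also have "\<dots> = lam * (\<Sum>i\<in>{0..<nV}. v $ i * cnj (v $ i))"
      by (simp add: sum_distrib_left mult.commute mult.left_commute)
    also have "\<dots> = lam * of_real N"
      unfolding N_def of_real_sum complex_norm_square[symmetric] ..
    finally show ?thesis .
  qed
  have s2: "cnj s = s"
  proof -
    have "cnj s = (\<Sum>i\<in>{0..<nV}. \<Sum>j\<in>{0..<nV}. if E (vl!i) (vl!j) then v $ i * cnj (v $ j) else 0)"
    proof -
      have cnjif: "\<And>P a. cnj (if P then a else 0) = (if P then cnj a else 0)" by simp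
      show ?thesis unfolding s_def cnj_sum cnjif complex_cnj_mult complex_cnj_cnj ..
    qed
    also have "\<dots> = (\<Sum>j\<in>{0..<nV}. \<Sum>i\<in>{0..<nV}. if E (vl!i) (vl!j) then v $ i * cnj (v $ j) else 0)"
      by (rule sum.swap)
    also have "\<dots> = s" unfolding s_def
    proof (rule sum.cong, simp, rule sum.cong, simp)
      fix i j
      have symE: "E (vl ! j) (vl ! i) = E (vl ! i) (vl ! j)" using E_props(3) by blast
      show "(if E (vl ! j) (vl ! i) then v $ j * cnj (v $ i) else 0) = (if E (vl ! i) (vl ! j) then cnj (v $ i) * v $ j else 0)"
        unfolding symE by (simp add: mult.commute)
    qed
    finally show ?thesis .
  qed
  have "Im (cnj s) = Im s" using s2 by simp
  then have "Im s = 0" by simp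
  then have "Im (lam * of_real N) = 0" using s1 by simp
  then show "Im lam = 0" using Npos by simp
  define m where "m = Max ((\<lambda>i. cmod (v $ i)) ` {0..<nV})"
  have m_ge: "cmod (v $ i) \<le> m" if "i < nV" for i unfolding m_def using that by auto
  have "m \<in> (\<lambda>i. cmod (v $ i)) ` {0..<nV}" unfolding m_def using nV_pos by (intro Max_in) auto
  then obtain i0 where i0: "i0 < nV" "cmod (v $ i0) = m" by auto
  have "cmod (v $ i1) > 0" using i1 by simp
  then have mpos: "m > 0" using m_ge[OF i1(1)] by linarith
  have "cmod lam * m = cmod (\<Sum>j\<in>{0..<nV}. if E (vl!i0) (vl!j) then v $ j else 0)"
    using arg_cong[OF eq[OF i0(1)], of cmod] i0(2) by (simp add: norm_mult)
  also have "\<dots> \<le> (\<Sum>j\<in>{0..<nV}. cmod (if E (vl!i0) (vl!j) then v $ j else 0))"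
    by (rule norm_sum)
  also have "\<dots> \<le> (\<Sum>j\<in>{0..<nV}. if E (vl!i0) (vl!j) then m else 0)"
    by (rule sum_mono, insert m_ge, auto)
  also have "\<dots> = (\<Sum>j\<in>{0..<nV}. if E (vl!i0) (vl!j) then 1 else 0) * m"
  proof -
    have ifm2: "\<And>P. (if P then 1 else 0) * m = (if P then m else 0)" by simp
    show ?thesis unfolding sum_distrib_right ifm2 ..
  qed
  also have "\<dots> = real d * m" using rowsum[OF i0(1), where 'a=real] by simp
  finally show "cmod lam \<le> real d" using mpos by simp
qed

end

context rgraph begin

definition Cm :: "complex mat" where "Cm = char_matrix Am (of_nat d)"

lemma Cm_c[simp]: "Cm \<in> carrier_mat nV nV" unfolding Cm_def by simp
lemma Cm_dims[simp]: "dim_row Cm = nV" "dim_col Cm = nV" using carrier_matD[OF Cm_c] by auto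

lemma Cm_entry: "i < nV \<Longrightarrow> j < nV \<Longrightarrow> Cm $$ (i,j) = (if E (vl!i) (vl!j) then 1 else 0) - (if i = j then of_nat d else 0)"
  unfolding Cm_def char_matrix_def Am_def by simp

lemma Cm_sym: "i < nV \<Longrightarrow> j < nV \<Longrightarrow> Cm $$ (i,j) = Cm $$ (j,i)"
  unfolding Cm_entry using E_props(3) by (auto)

lemma Cm_real: "i < nV \<Longrightarrow> j < nV \<Longrightarrow> cnj (Cm $$ (i,j)) = Cm $$ (i,j)"
  unfolding Cm_entry by simp

lemma Cm_mulv: "u \<in> carrier_vec nV \<Longrightarrow> i < nV \<Longrightarrow> (Cm *\<^sub>v u) $ i = (\<Sum>j\<in>{0..<nV}. Cm $$ (i,j) * u $ j)"
  by (auto simp: mult_mat_vec_def scalar_prod_def intro!: sum.cong)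

lemma ker_sq:
  assumes v: "v \<in> carrier_vec nV" and z: "Cm *\<^sub>v (Cm *\<^sub>v v) = 0\<^sub>v nV"
  shows "Cm *\<^sub>v v = 0\<^sub>v nV"
proof -
  define w where "w = Cm *\<^sub>v v"
  have w: "w \<in> carrier_vec nV" unfolding w_def by (rule mult_mat_vec_carrier[OF Cm_c v])
  have Cw: "(Cm *\<^sub>v w) $ j = 0" if "j < nV" for j using z that unfolding w_def by simp
  have "(\<Sum>i\<in>{0..<nV}. cnj (w $ i) * w $ i) = (\<Sum>i\<in>{0..<nV}. \<Sum>j\<in>{0..<nV}. cnj (w $ i) * (Cm $$ (i,j) * v $ j))"
  proof (rule sum.cong, simp)
    fix i assume "i \<in> {0..<nV}"
    then have i: "i < nV" by simp
    have wi: "w $ i = (\<Sum>j\<in>{0..<nV}. Cm $$ (i,j) * v $ j)" unfolding w_def by (rule Cm_mulv[OF v i])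
    have "cnj (w $ i) * w $ i = cnj (w $ i) * (\<Sum>j\<in>{0..<nV}. Cm $$ (i,j) * v $ j)" using wi by simp
    then show "cnj (w $ i) * w $ i = (\<Sum>j\<in>{0..<nV}. cnj (w $ i) * (Cm $$ (i,j) * v $ j))"
      by (simp add: sum_distrib_left)
  qed
  also have "\<dots> = (\<Sum>j\<in>{0..<nV}. \<Sum>i\<in>{0..<nV}. cnj (w $ i) * (Cm $$ (i,j) * v $ j))"
    by (rule sum.swap)
  also have "\<dots> = (\<Sum>j\<in>{0..<nV}. v $ j * cnj (\<Sum>i\<in>{0..<nV}. Cm $$ (j,i) * w $ i))"
  proof (rule sum.cong, simp)
    fix j assume j: "j \<in> {0..<nV}"
    have "v $ j * cnj (\<Sum>i\<in>{0..<nV}. Cm $$ (j,i) * w $ i) = (\<Sum>i\<in>{0..<nV}. v $ j * (cnj (Cm $$ (j,i)) * cnj (w $ i)))"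
      by (simp add: cnj_sum sum_distrib_left)
    also have "\<dots> = (\<Sum>i\<in>{0..<nV}. cnj (w $ i) * (Cm $$ (i,j) * v $ j))"
      by (rule sum.cong, simp, insert j, simp add: Cm_real Cm_sym[of _ j])
    finally show "(\<Sum>i\<in>{0..<nV}. cnj (w $ i) * (Cm $$ (i,j) * v $ j)) = v $ j * cnj (\<Sum>i\<in>{0..<nV}. Cm $$ (j,i) * w $ i)" by simp
  qed
  also have "\<dots> = 0"
    using Cw by (simp add: Cm_mulv[OF w, symmetric])
  finally have s0: "(\<Sum>i\<in>{0..<nV}. cnj (w $ i) * w $ i) = 0" .
  have "(\<Sum>i\<in>{0..<nV}. (cmod (w $ i))^2) = 0"
  proof -
    have "complex_of_real (\<Sum>i\<in>{0..<nV}. (cmod (w $ i))^2) = (\<Sum>i\<in>{0..<nV}. cnj (w $ i) * w $ i)"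
      unfolding of_real_sum complex_norm_square by (rule sum.cong, simp, simp only: mult.commute)
    then show ?thesis using s0 of_real_eq_0_iff by metis
  qed
  then have "\<forall>i\<in>{0..<nV}. (cmod (w $ i))^2 = 0" by (subst sum_nonneg_eq_0_iff[symmetric]) auto
  then have "w = 0\<^sub>v nV" using w by (intro eq_vecI) auto
  then show ?thesis unfolding w_def .
qed

lemma Cm_Am: assumes v: "v \<in> carrier_vec nV" shows "Cm *\<^sub>v v = Am *\<^sub>v v - of_nat d \<cdot>\<^sub>v v"
proof (rule eq_vecI)
  fix i assume "i < dim_vec (Am *\<^sub>v v - of_nat d \<cdot>\<^sub>v v)"
  then have i: "i < nV" using v by (simp add: Am_def)
  have "(Cm *\<^sub>v v) $ i = (\<Sum>j\<in>{0..<nV}. (if E (vl!i) (vl!j) then v $ j else 0) - (if i = j then of_nat d * v $ j else 0))"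
    unfolding Cm_mulv[OF v i] by (rule sum.cong, simp, simp add: Cm_entry i left_diff_distrib)
  also have "\<dots> = (Am *\<^sub>v v) $ i - of_nat d * v $ i"
    unfolding sum_subtractf Am_mulv[OF v i] using i by simp
  finally show "(Cm *\<^sub>v v) $ i = (Am *\<^sub>v v - of_nat d \<cdot>\<^sub>v v) $ i" using i v by (simp add: Am_def)
qed (use v in \<open>simp add: Am_def\<close>)

lemma ones_ker: "ones \<in> mat_kernel Cm"
  by (rule mat_kernelI[OF Cm_c ones_c], unfold Cm_Am[OF ones_c] ones_eig, simp add: ones_def)

lemma ker_ones: assumes "v \<in> mat_kernel Cm" shows "v = v $ 0 \<cdot>\<^sub>v ones"
proof -
  have v: "v \<in> carrier_vec nV" and z: "Cm *\<^sub>v v = 0\<^sub>v nV" using mat_kernelD[OF Cm_c assms] by auto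
  have "Am *\<^sub>v v = of_nat d \<cdot>\<^sub>v v"
  proof (rule eq_vecI)
    fix i assume "i < dim_vec (of_nat d \<cdot>\<^sub>v v)"
    then have i: "i < nV" using v by simp
    have "(Am *\<^sub>v v - of_nat d \<cdot>\<^sub>v v) $ i = 0" using z Cm_Am[OF v] i by simp
    then show "(Am *\<^sub>v v) $ i = (of_nat d \<cdot>\<^sub>v v) $ i" using i v by (simp add: Am_def)
  qed (use v in \<open>simp add: Am_def\<close>)
  then show ?thesis by (rule kernel_const[OF v])
qed

lemma kdim1: "kernel_dim Cm \<le> 1"
proof -
  interpret K: kernel nV nV Cm by (unfold_locales) (rule Cm_c)
  have sub: "{ones} \<subseteq> mat_kernel Cm" using ones_ker by auto
  have "K.Ker.span {ones} \<subseteq> mat_kernel Cm" by (rule K.Ker.span_is_subset2[OF sub])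
  moreover have "mat_kernel Cm \<subseteq> K.Ker.span {ones}"
  proof
    fix v assume v: "v \<in> mat_kernel Cm"
    interpret S: submodule class_ring "K.Ker.span {ones}" K.VK by (rule K.Ker.span_is_submodule[OF sub])
    have "ones \<in> K.Ker.span {ones}" using K.Ker.in_own_span[OF sub] by auto
    then have "v $ 0 \<cdot>\<^sub>v ones \<in> K.Ker.span {ones}" using S.smult_closed by auto
    then show "v \<in> K.Ker.span {ones}" using ker_ones[OF v] by simp
  qed
  ultimately have gen: "K.Ker.span {ones} = mat_kernel Cm" by auto
  have "K.dim \<le> card {ones}" by (rule K.Ker.gen_ge_dim[OF _ sub gen], simp)
  then show ?thesis by simp
qed

lemma Cm_zero: "Cm *\<^sub>v 0\<^sub>v nV = 0\<^sub>v nV"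
  by (rule eq_vecI, auto simp: Cm_mulv)

lemma kerCm_pow: "k \<in> {1,2} \<Longrightarrow> mat_kernel (Cm ^\<^sub>m k) = mat_kernel Cm"
proof -
  assume k: "k \<in> {1,2}"
  show ?thesis
  proof (cases "k = 1")
    case True then show ?thesis using Cm_c by simp
  next
    case False
    then have k2: "k = 2" using k by auto
    have pw: "Cm ^\<^sub>m k = Cm * Cm" unfolding k2 using Cm_c by (simp add: numeral_2_eq_2)
    show ?thesis unfolding pw
    proof (intro equalityI subsetI)
      fix v assume v: "v \<in> mat_kernel (Cm * Cm)"
      then have vc: "v \<in> carrier_vec nV" and z: "(Cm * Cm) *\<^sub>v v = 0\<^sub>v nV"
        using mat_kernelD[OF mult_carrier_mat[OF Cm_c Cm_c] v] by auto
      have "Cm *\<^sub>v (Cm *\<^sub>v v) = 0\<^sub>v nV" using z assoc_mult_mat_vec[OF Cm_c Cm_c vc] by simp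
      then show "v \<in> mat_kernel Cm" using ker_sq[OF vc] vc by (intro mat_kernelI[OF Cm_c]) auto
    next
      fix v assume v: "v \<in> mat_kernel Cm"
      then have vc: "v \<in> carrier_vec nV" and z: "Cm *\<^sub>v v = 0\<^sub>v nV"
        using mat_kernelD[OF Cm_c v] by auto
      have "(Cm * Cm) *\<^sub>v v = 0\<^sub>v nV" using z assoc_mult_mat_vec[OF Cm_c Cm_c vc] Cm_zero by simp
      then show "v \<in> mat_kernel (Cm * Cm)" by (rule mat_kernelI[OF mult_carrier_mat[OF Cm_c Cm_c] vc])
    qed
  qed
qed

lemma kdim_pow: "k \<in> {1,2} \<Longrightarrow> kernel_dim (Cm ^\<^sub>m k) = kernel_dim Cm"
  unfolding kernel_dim_def using kerCm_pow[of k] Cm_c by simp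

lemma list_min_lemma:
  "(\<forall>s\<in>set ss. (1::nat) \<le> s) \<Longrightarrow> sum_list (map (min 2) ss) = sum_list (map (min 1) ss) \<Longrightarrow>
    sum_list ss = sum_list (map (min 1) ss)"
proof (induct ss)
  case Nil then show ?case by simp
next
  case (Cons a ss)
  have m: "sum_list (map (min 1) ss) \<le> sum_list (map (min 2) ss)"
    by (rule sum_list_mono, auto)
  have a1: "1 \<le> a" using Cons.prems by auto
  have eq: "min 2 a + sum_list (map (min 2) ss) = min 1 a + sum_list (map (min 1) ss)" using Cons.prems(2) by simp
  have "min 1 a \<le> min 2 a" by simp
  with eq m have mm: "min 2 a = min 1 a" and e: "sum_list (map (min 2) ss) = sum_list (map (min 1) ss)" by linarith+
  have "a = 1"
  proof (rule ccontr)
    assume "a \<noteq> 1"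
    then have "2 \<le> a" using a1 by simp
    then show False using mm by simp
  qed
  with Cons.hyps[OF _ e] Cons.prems(1) show ?case by simp
qed

lemma order_d: "Polynomial.order (of_nat d) (char_poly Am) = 1"
proof -
  obtain es where es: "char_poly Am = (\<Prod>e\<leftarrow>es. [:- e, 1:])" using char_poly_factorized[OF Am_c] by auto
  obtain n_as where jnf: "jordan_nf Am n_as" using jordan_nf_exists[OF Am_c es] by auto
  define ss where "ss = map fst [(n, e)\<leftarrow>n_as . e = of_nat d]"
  have ord: "Polynomial.order (of_nat d) (char_poly Am) = sum_list ss"
    unfolding jordan_nf_order[OF jnf] ss_def by (induct n_as) auto
  have dg: "dim_gen_eigenspace Am (of_nat d) k = sum_list (map (min k) ss)" for k
    unfolding dim_gen_eigenspace[OF jnf] ss_def by (induct n_as) auto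
  have dk: "dim_gen_eigenspace Am (of_nat d) k = kernel_dim Cm" if "k \<in> {1,2}" for k
    unfolding dim_gen_eigenspace_def Cm_def[symmetric] using kdim_pow[OF that] .
  have pos: "\<forall>s\<in>set ss. 1 \<le> s" using jnf unfolding jordan_nf_def ss_def
    by (auto simp: Suc_le_eq image_iff)
  have "sum_list ss = sum_list (map (min 1) ss)"
    by (rule list_min_lemma[OF pos], unfold dg[symmetric], simp add: dk)
  then have le: "Polynomial.order (of_nat d) (char_poly Am) \<le> 1"
    unfolding ord using dg[of 1] dk[of 1] kdim1 by simp
  have onz: "ones \<noteq> 0\<^sub>v nV"
  proof
    assume "ones = 0\<^sub>v nV"
    then have "ones $ 0 = (0\<^sub>v nV :: complex vec) $ 0" by simp
    then show False using nV_pos unfolding ones_def by simp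
  qed
  have "eigenvalue Am (of_nat d)"
    unfolding eigenvalue_def eigenvector_def using ones_eig onz
    by (intro exI[of _ ones]) (auto simp: Am_def)
  then have "poly (char_poly Am) (of_nat d) = 0" using eigenvalue_root_char_poly[OF Am_c] by simp
  moreover have "char_poly Am \<noteq> 0" using degree_monic_char_poly[OF Am_c] by auto
  ultimately have "Polynomial.order (of_nat d) (char_poly Am) \<noteq> 0" using order_root by blast
  with le show ?thesis by simp
qed

end

lemma order_prod_linear:
  fixes a :: "'a :: idom"
  shows "Polynomial.order a (\<Prod>e\<leftarrow>es. [:- e, 1:]) = length (filter (\<lambda>e. e = a) es)"
proof (induct es)
  case Nil then show ?case by (simp add: order_0I)
next
  case (Cons e es)
  have a: "[:- e, 1:] \<noteq> (0::'a poly)" by simp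
  have "monic (\<Prod>e\<leftarrow>es. [:- e, 1:] :: 'a poly)" by (rule monic_prod_list, auto)
  then have b: "(\<Prod>e\<leftarrow>es. [:- e, 1:]) \<noteq> (0::'a poly)" by auto
  have nz: "[:- e, 1:] * (\<Prod>e\<leftarrow>es. [:- e, 1:]) \<noteq> (0 :: 'a poly)" by (rule no_zero_divisors[OF a b])
  have "Polynomial.order a [:- e, 1:] = (if e = a then 1 else 0)"
    using order_linear_power[of a "-e" 1] by auto
  then show ?case using Cons order_mult[OF nz] by simp
qed

context rgraph begin

lemma spectrum:
  obtains mus :: "real list" where
    "char_poly Am = (\<Prod>mu\<leftarrow>mus. [:- complex_of_real mu, 1:])"
    "length mus = nV" "\<And>mu. mu \<in> set mus \<Longrightarrow> mu \<le> real d"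
    "sum_list mus = 0" "length (filter (\<lambda>mu. mu = real d) mus) = 1"
proof -
  obtain es where es: "char_poly Am = (\<Prod>e\<leftarrow>es. [:- e, 1:])" and len: "length es = nV"
    using char_poly_factorized[OF Am_c] by auto
  have eprops: "Im e = 0 \<and> cmod e \<le> real d" if e: "e \<in> set es" for e
  proof -
    have "poly (char_poly Am) e = 0" unfolding es using e
      by (induct es) (auto simp: poly_prod_list)
    then have "eigenvalue Am e" using eigenvalue_root_char_poly[OF Am_c] by simp
    then obtain v where "eigenvector Am v e" unfolding eigenvalue_def by auto
    then have v: "v \<in> carrier_vec nV" "v \<noteq> 0\<^sub>v nV" "Am *\<^sub>v v = e \<cdot>\<^sub>v v"
      unfolding eigenvector_def by (auto simp: Am_def)
    show ?thesis using eig_props[OF v] by simp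
  qed
  define mus where "mus = map Re es"
  have es_eq: "es = map complex_of_real mus"
    unfolding mus_def by (rule nth_equalityI, auto, metis complex_eq_iff eprops nth_mem Im_complex_of_real Re_complex_of_real)
  show ?thesis
  proof
    show "char_poly Am = (\<Prod>mu\<leftarrow>mus. [:- complex_of_real mu, 1:])"
      unfolding es es_eq by (simp add: comp_def)
    show "length mus = nV" using len mus_def by simp
    show "mu \<le> real d" if "mu \<in> set mus" for mu
    proof -
      from that have "mu \<in> Re ` set es" unfolding mus_def by simp
      then obtain e where e: "e \<in> set es" "mu = Re e" by auto
      then show ?thesis using eprops[OF e(1)] abs_Re_le_cmod[of e] by linarith
    qed
    have "sum_list es = mtr Am" by (rule schur_trace[OF Am_c es])
    then have "sum_list es = 0" using mtr_Am by simp
    moreover have "sum_list (map complex_of_real mus) = of_real (sum_list mus)" by (induct mus) auto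
    ultimately show "sum_list mus = 0" unfolding es_eq by simp
    have "length (filter (\<lambda>e. e = of_nat d) es) = 1"
      using order_d unfolding es order_prod_linear .
    moreover have "(\<lambda>x. complex_of_real x = complex_of_nat d) = (\<lambda>x. x = real d)"
    proof
      fix x
      have "complex_of_nat d = complex_of_real (real d)" by simp
      then show "(complex_of_real x = complex_of_nat d) = (x = real d)" using of_real_eq_iff by metis
    qed
    ultimately show "length (filter (\<lambda>mu. mu = real d) mus) = 1"
      unfolding es_eq by (simp add: comp_def)
  qed
qed

end

lemma det_ab:
  fixes M :: "'a :: field mat"
  assumes M: "M \<in> carrier_mat n n" and b: "b \<noteq> 0"
  shows "det (a \<cdot>\<^sub>m 1\<^sub>m n - b \<cdot>\<^sub>m M) = b ^ n * poly (char_poly M) (a / b)"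
proof -
  have "a \<cdot>\<^sub>m 1\<^sub>m n - b \<cdot>\<^sub>m M = b \<cdot>\<^sub>m ((a / b) \<cdot>\<^sub>m 1\<^sub>m n - M)"
    using M b by (intro eq_matI) (auto simp: field_simps)
  then show ?thesis using M by (simp add: poly_char[OF M])
qed

lemma det_scaled:
  fixes M :: "'a :: field mat"
  assumes M: "M \<in> carrier_mat n n" and t: "t \<noteq> 0"
  shows "det (1\<^sub>m n - t \<cdot>\<^sub>m M) = t ^ n * poly (char_poly M) (1 / t)"
proof -
  have "1 \<cdot>\<^sub>m 1\<^sub>m n = (1\<^sub>m n :: 'a mat)" by (intro eq_matI) auto
  then show ?thesis using det_ab[OF M t, of 1] by simp
qed

lemma poly_eq_inf:
  fixes p q :: "'a :: idom poly"
  assumes S: "infinite S" and eq: "\<And>x. x \<in> S \<Longrightarrow> poly p x = poly q x"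
  shows "p = q"
proof (rule ccontr)
  assume "p \<noteq> q"
  then have "p - q \<noteq> 0" by simp
  from poly_roots_finite[OF this] have "finite {x. poly (p - q) x = 0}" .
  moreover have "S \<subseteq> {x. poly (p - q) x = 0}" using eq by auto
  ultimately show False using S finite_subset by blast
qed

lemma prod_list_scale:
  "prod_list (map (\<lambda>x. c * f x) xs) = c ^ length xs * prod_list (map f xs)"
  for c :: "'a :: comm_monoid_mult"
  by (induct xs) (auto simp: algebra_simps)

lemma prod_list_mult2:
  "prod_list (map (\<lambda>x. f x * g x) xs) = prod_list (map f xs) * prod_list (map g xs)"
  for f g :: "'b \<Rightarrow> 'a :: comm_monoid_mult"
  by (induct xs) (auto simp: algebra_simps)

lemma poly_prod_list_map: "poly (prod_list (map f xs)) x = prod_list (map (\<lambda>y. poly (f y) x) xs)"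
  by (induct xs) auto


context rgraph begin

lemma Pe_c: "arc_matrix V E (P_edge E) \<in> carrier_mat nA nA"
  unfolding arc_edge using mult_carrier_mat[OF Qm_c Rm_c] by simp

lemma d_pos: "(of_nat d :: complex) \<noteq> 0" using d3 by simp

lemma pe_poly:
  assumes cp: "char_poly Am = (\<Prod>mu\<leftarrow>mus. [:- complex_of_real mu, 1:])" and len: "length mus = nV"
  shows "char_poly (arc_matrix V E (P_edge E)) * [:0,1:] ^ nV
    = [:0,1:] ^ nA * (\<Prod>mu\<leftarrow>mus. [:- (complex_of_real mu / of_nat d), 1:])"
proof (rule poly_eq_inf[of "UNIV - {0}"])
  show "infinite (UNIV - {0::complex})" by (simp add: infinite_UNIV_char_0)
  fix x :: complex assume "x \<in> UNIV - {0}"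
  then have x: "x \<noteq> 0" by simp
  define c0 where "c0 = (of_nat d :: complex)"
  have c0: "c0 \<noteq> 0" unfolding c0_def using d_pos .
  define Pe where "Pe = arc_matrix V E (P_edge E)"
  have Pe: "Pe \<in> carrier_mat nA nA" unfolding Pe_def by (rule Pe_c)
  define k where "k = 1 / (c0 * x)"
  have k: "k \<noteq> 0" unfolding k_def using c0 x by simp
  have "det (1\<^sub>m nA - (1/x) \<cdot>\<^sub>m Pe) = (1/x) ^ nA * poly (char_poly Pe) x"
    using det_scaled[OF Pe, of "1/x"] x by simp
  moreover have "(1/x) \<cdot>\<^sub>m Pe = (k \<cdot>\<^sub>m Qm) * Rm"
  proof -
    have "(k \<cdot>\<^sub>m Qm) * Rm = k \<cdot>\<^sub>m (Qm * Rm)" by (rule mult_smult_assoc_mat[OF Qm_c Rm_c])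
    moreover have "(1/x) \<cdot>\<^sub>m Pe = k \<cdot>\<^sub>m (Qm * Rm)"
      unfolding Pe_def arc_edge k_def c0_def by (intro eq_matI) auto
    ultimately show ?thesis by simp
  qed
  moreover have "det (1\<^sub>m nA - (k \<cdot>\<^sub>m Qm) * Rm) = det (1\<^sub>m nV - Rm * (k \<cdot>\<^sub>m Qm))"
    by (rule sylvester, auto)
  moreover have "Rm * (k \<cdot>\<^sub>m Qm) = k \<cdot>\<^sub>m Am"
    using mult_smult_distrib[OF Rm_c Qm_c] RQ by simp
  moreover have "det (1\<^sub>m nV - k \<cdot>\<^sub>m Am) = k ^ nV * poly (char_poly Am) (c0 * x)"
    using det_scaled[OF Am_c k] unfolding k_def by simp
  ultimately have "(1/x) ^ nA * poly (char_poly Pe) x = k ^ nV * poly (char_poly Am) (c0 * x)" by simp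
  then have pe: "poly (char_poly Pe) x = x ^ nA * (k ^ nV * poly (char_poly Am) (c0 * x))"
    using x by (simp add: field_simps power_one_over)
  have pA: "poly (char_poly Am) (c0 * x) = prod_list (map (\<lambda>mu. c0 * x - complex_of_real mu) mus)"
    unfolding cp poly_prod_list_map by simp
  have B: "prod_list (map (\<lambda>mu. x - complex_of_real mu / c0) mus) * c0 ^ nV
      = prod_list (map (\<lambda>mu. c0 * x - complex_of_real mu) mus)"
  proof -
    have "prod_list (map (\<lambda>mu. c0 * x - complex_of_real mu) mus) = prod_list (map (\<lambda>mu. c0 * (x - complex_of_real mu / c0)) mus)"
      using c0 by (intro arg_cong[where f=prod_list] map_cong) (auto simp: field_simps)
    then show ?thesis unfolding prod_list_scale len by simp
  qed
  have kk: "k ^ nV * (c0 * x) ^ nV = 1" unfolding k_def power_mult_distrib[symmetric] using c0 x by simp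
  have A: "poly (char_poly Pe) x * x ^ nV * c0 ^ nV = x ^ nA * prod_list (map (\<lambda>mu. c0 * x - complex_of_real mu) mus)"
  proof -
    have "poly (char_poly Pe) x * x ^ nV * c0 ^ nV = x ^ nA * poly (char_poly Am) (c0 * x) * (k ^ nV * (c0 * x) ^ nV)"
      unfolding pe by (simp add: power_mult_distrib algebra_simps)
    then show ?thesis unfolding kk pA by simp
  qed
  have "poly (char_poly Pe) x * x ^ nV * c0 ^ nV = x ^ nA * prod_list (map (\<lambda>mu. x - complex_of_real mu / c0) mus) * c0 ^ nV"
    using A B by (metis mult.assoc)
  then have "poly (char_poly Pe) x * x ^ nV = x ^ nA * prod_list (map (\<lambda>mu. x - complex_of_real mu / c0) mus)"
    using c0 by simp
  then show "poly (char_poly (arc_matrix V E (P_edge E)) * [:0, 1:] ^ nV) x =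
         poly ([:0, 1:] ^ nA * (\<Prod>mu\<leftarrow>mus. [:- (complex_of_real mu / of_nat d), 1:])) x"
    unfolding Pe_def[symmetric] poly_mult poly_power poly_prod_list_map c0_def[symmetric] by simp
qed

end


context rgraph begin

abbreviation "II \<equiv> (1\<^sub>m nA :: complex mat)"

lemma dims_simp[simp]: "dim_row Qm = nA" "dim_col Qm = nV" "dim_row Rm = nV" "dim_col Rm = nA"
  "dim_row Jm = nA" "dim_col Jm = nA" "dim_row Sm = nA" "dim_col Sm = nA" "dim_row Am = nV" "dim_col Am = nV"
  by (simp_all add: Qm_def Rm_def Jm_def Sm_def Am_def)

lemma IJ_c[simp]: "II - u \<cdot>\<^sub>m Jm \<in> carrier_mat nA nA" "II + u \<cdot>\<^sub>m Jm \<in> carrier_mat nA nA"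
  by (auto intro: minus_carrier_mat add_carrier_mat)

lemma QR_c[simp]: "Qm * Rm \<in> carrier_mat nA nA" using mult_carrier_mat[OF Qm_c Rm_c] .

lemma F2: "(II - u \<cdot>\<^sub>m Jm) * (II + u \<cdot>\<^sub>m Jm) = (1 - u^2) \<cdot>\<^sub>m II"
proof -
  have c1: "II - u \<cdot>\<^sub>m Jm \<in> carrier_mat nA nA" by simp
  have "(II - u \<cdot>\<^sub>m Jm) * (II + u \<cdot>\<^sub>m Jm) = (II - u \<cdot>\<^sub>m Jm) * II + (II - u \<cdot>\<^sub>m Jm) * (u \<cdot>\<^sub>m Jm)"
    by (rule mult_add_distrib_mat[OF c1], auto)
  also have "(II - u \<cdot>\<^sub>m Jm) * II = II - u \<cdot>\<^sub>m Jm" using c1 by simp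
  also have "(II - u \<cdot>\<^sub>m Jm) * (u \<cdot>\<^sub>m Jm) = u \<cdot>\<^sub>m ((II - u \<cdot>\<^sub>m Jm) * Jm)"
    by (rule mult_smult_distrib[OF c1 Jm_c])
  also have "(II - u \<cdot>\<^sub>m Jm) * Jm = II * Jm - (u \<cdot>\<^sub>m Jm) * Jm"
    by (rule minus_mult_distrib_mat, auto)
  also have "(u \<cdot>\<^sub>m Jm) * Jm = u \<cdot>\<^sub>m (Jm * Jm)" by (rule mult_smult_assoc_mat[OF Jm_c Jm_c])
  also have "II * Jm = Jm" by simp
  also have "II - u \<cdot>\<^sub>m Jm + u \<cdot>\<^sub>m (Jm - u \<cdot>\<^sub>m (Jm * Jm)) = (1 - u^2) \<cdot>\<^sub>m II"
    unfolding JJ by (rule eq_matI) (auto simp: algebra_simps power2_eq_square)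
  finally show ?thesis .
qed

lemma F3: "Sm * (II + u \<cdot>\<^sub>m Jm) * Sm = II - u \<cdot>\<^sub>m Jm"
proof -
  have "Sm * (II + u \<cdot>\<^sub>m Jm) = Sm * II + Sm * (u \<cdot>\<^sub>m Jm)"
    by (rule mult_add_distrib_mat[OF Sm_c], auto)
  also have "Sm * II = Sm" by simp
  also have "Sm * (u \<cdot>\<^sub>m Jm) = u \<cdot>\<^sub>m (Sm * Jm)" by (rule mult_smult_distrib[OF Sm_c Jm_c])
  finally have a: "Sm * (II + u \<cdot>\<^sub>m Jm) = Sm + u \<cdot>\<^sub>m (Sm * Jm)" .
  have "(Sm + u \<cdot>\<^sub>m (Sm * Jm)) * Sm = Sm * Sm + (u \<cdot>\<^sub>m (Sm * Jm)) * Sm"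
    by (rule add_mult_distrib_mat, auto)
  also have "(u \<cdot>\<^sub>m (Sm * Jm)) * Sm = u \<cdot>\<^sub>m (Sm * Jm * Sm)"
    by (rule mult_smult_assoc_mat, auto)
  also have "Sm * Sm + u \<cdot>\<^sub>m (Sm * Jm * Sm) = II - u \<cdot>\<^sub>m Jm"
    unfolding SS SJS by (rule eq_matI) auto
  finally show ?thesis unfolding a .
qed

lemma F1: "(II - u \<cdot>\<^sub>m Jm) * (II + u \<cdot>\<^sub>m Jm - u \<cdot>\<^sub>m (Qm * Rm))
   = (1 - u^2) \<cdot>\<^sub>m II - u \<cdot>\<^sub>m ((II - u \<cdot>\<^sub>m Jm) * Qm * Rm)"
proof -
  have c1: "II - u \<cdot>\<^sub>m Jm \<in> carrier_mat nA nA" by simp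
  have "(II - u \<cdot>\<^sub>m Jm) * (II + u \<cdot>\<^sub>m Jm - u \<cdot>\<^sub>m (Qm * Rm))
      = (II - u \<cdot>\<^sub>m Jm) * (II + u \<cdot>\<^sub>m Jm) - (II - u \<cdot>\<^sub>m Jm) * (u \<cdot>\<^sub>m (Qm * Rm))"
    by (rule mult_minus_distrib_mat[OF c1], auto)
  also have "(II - u \<cdot>\<^sub>m Jm) * (u \<cdot>\<^sub>m (Qm * Rm)) = u \<cdot>\<^sub>m ((II - u \<cdot>\<^sub>m Jm) * (Qm * Rm))"
    by (rule mult_smult_distrib[OF c1 QR_c])
  also have "(II - u \<cdot>\<^sub>m Jm) * (Qm * Rm) = (II - u \<cdot>\<^sub>m Jm) * Qm * Rm"
    by (rule assoc_mult_mat[symmetric, OF c1 Qm_c Rm_c])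
  finally show ?thesis unfolding F2 .
qed

lemma F4: "Rm * ((II - u \<cdot>\<^sub>m Jm) * Qm) = Am - (u * of_nat d) \<cdot>\<^sub>m 1\<^sub>m nV"
proof -
  have "(II - u \<cdot>\<^sub>m Jm) * Qm = II * Qm - (u \<cdot>\<^sub>m Jm) * Qm"
    by (rule minus_mult_distrib_mat[of _ nA nA _ _ nV], auto)
  also have "(u \<cdot>\<^sub>m Jm) * Qm = u \<cdot>\<^sub>m (Jm * Qm)" by (rule mult_smult_assoc_mat[OF Jm_c Qm_c])
  also have "II * Qm = Qm" by simp
  finally have a: "(II - u \<cdot>\<^sub>m Jm) * Qm = Qm - u \<cdot>\<^sub>m (Jm * Qm)" .
  have JQ: "Jm * Qm \<in> carrier_mat nA nV" by (rule mult_carrier_mat[OF Jm_c Qm_c])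
  have "Rm * (Qm - u \<cdot>\<^sub>m (Jm * Qm)) = Rm * Qm - Rm * (u \<cdot>\<^sub>m (Jm * Qm))"
    by (rule mult_minus_distrib_mat[OF Rm_c], auto simp: JQ)
  also have "Rm * (u \<cdot>\<^sub>m (Jm * Qm)) = u \<cdot>\<^sub>m (Rm * (Jm * Qm))" by (rule mult_smult_distrib[OF Rm_c JQ])
  also have "Rm * (Jm * Qm) = Rm * Jm * Qm" by (rule assoc_mult_mat[symmetric, OF Rm_c Jm_c Qm_c])
  also have "Rm * Qm - u \<cdot>\<^sub>m (Rm * Jm * Qm) = Am - (u * of_nat d) \<cdot>\<^sub>m 1\<^sub>m nV"
    unfolding RQ RJQ by (rule eq_matI) (auto simp: Am_def)
  finally show ?thesis unfolding a .
qed

end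

context rgraph begin

lemma Pn_c: "arc_matrix V E (P_nb E) \<in> carrier_mat nA nA"
  unfolding arc_nb using minus_carrier_mat[OF Jm_c, of "Qm*Rm"] by simp

lemma det_J: "det (II - u \<cdot>\<^sub>m Jm) ^ 2 = (1 - u^2) ^ nA"
proof -
  have SSd: "det Sm * det Sm = 1" using det_mult[OF Sm_c Sm_c] SS by simp
  have "det (II - u \<cdot>\<^sub>m Jm) = det (Sm * (II + u \<cdot>\<^sub>m Jm) * Sm)" unfolding F3 ..
  also have "\<dots> = det Sm * det (II + u \<cdot>\<^sub>m Jm) * det Sm"
    using det_mult[OF mult_carrier_mat[OF Sm_c IJ_c(2)] Sm_c] det_mult[OF Sm_c IJ_c(2)] by simp
  also have "\<dots> = det (II + u \<cdot>\<^sub>m Jm)" using SSd by (simp add: algebra_simps)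
  finally have e: "det (II - u \<cdot>\<^sub>m Jm) = det (II + u \<cdot>\<^sub>m Jm)" .
  have "det (II - u \<cdot>\<^sub>m Jm) * det (II + u \<cdot>\<^sub>m Jm) = det ((1 - u^2) \<cdot>\<^sub>m II)"
    unfolding F2[symmetric] by (rule det_mult[symmetric], auto)
  also have "\<dots> = (1 - u^2) ^ nA" by simp
  finally show ?thesis unfolding power2_eq_square using e by simp
qed

lemma nb_det:
  fixes x :: complex
  defines "cc \<equiv> of_nat d - (1::complex)"
  defines "u \<equiv> 1 / (cc * x)"
  defines "bb \<equiv> u / (1 - u^2)"
  defines "aa \<equiv> 1 + u^2 * of_nat d / (1 - u^2)"
  assumes x: "x \<noteq> 0" and u1: "1 - u^2 \<noteq> 0"
  shows "poly (char_poly (arc_matrix V E (P_nb E))) x ^ 2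
     = x ^ (2 * nA) * (1 - u^2) ^ nA * (bb ^ nV * poly (char_poly Am) (aa / bb)) ^ 2"
proof -
  define Pn where "Pn = arc_matrix V E (P_nb E)"
  have Pn: "Pn \<in> carrier_mat nA nA" unfolding Pn_def by (rule Pn_c)
  have cc: "cc \<noteq> 0" unfolding cc_def using d3 by simp
  have u0: "u \<noteq> 0" unfolding u_def using cc x by simp
  have b0: "bb \<noteq> 0" unfolding bb_def using u0 u1 by simp
  define D where "D = det (II - (1/x) \<cdot>\<^sub>m Pn)"
  have D: "D = (1/x) ^ nA * poly (char_poly Pn) x"
    unfolding D_def using det_scaled[OF Pn, of "1/x"] x by simp
  have M1: "II - (1/x) \<cdot>\<^sub>m Pn = II + u \<cdot>\<^sub>m Jm - u \<cdot>\<^sub>m (Qm * Rm)"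
    unfolding Pn_def arc_nb u_def cc_def by (rule eq_matI) (auto simp: diff_divide_distrib)
  define X0 where "X0 = (II - u \<cdot>\<^sub>m Jm) * Qm"
  have X0: "X0 \<in> carrier_mat nA nV" unfolding X0_def by (rule mult_carrier_mat[OF IJ_c(1) Qm_c])
  have "det (II - u \<cdot>\<^sub>m Jm) * D = det ((II - u \<cdot>\<^sub>m Jm) * (II + u \<cdot>\<^sub>m Jm - u \<cdot>\<^sub>m (Qm * Rm)))"
    unfolding D_def M1 by (rule det_mult[symmetric], auto)
  also have "\<dots> = det ((1 - u^2) \<cdot>\<^sub>m II - u \<cdot>\<^sub>m (X0 * Rm))" unfolding F1 X0_def ..
  also have "(1 - u^2) \<cdot>\<^sub>m II - u \<cdot>\<^sub>m (X0 * Rm) = (1 - u^2) \<cdot>\<^sub>m (II - (bb \<cdot>\<^sub>m X0) * Rm)"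
  proof -
    have "(bb \<cdot>\<^sub>m X0) * Rm = bb \<cdot>\<^sub>m (X0 * Rm)" by (rule mult_smult_assoc_mat[OF X0 Rm_c])
    moreover have "X0 * Rm \<in> carrier_mat nA nA" using mult_carrier_mat[OF X0 Rm_c] .
    ultimately show ?thesis unfolding bb_def using u1
      by (intro eq_matI) (auto simp: field_simps)
  qed
  also have "det \<dots> = (1 - u^2) ^ nA * det (II - (bb \<cdot>\<^sub>m X0) * Rm)" by simp
  also have "det (II - (bb \<cdot>\<^sub>m X0) * Rm) = det (1\<^sub>m nV - Rm * (bb \<cdot>\<^sub>m X0))"
    by (rule sylvester, insert X0, auto)
  also have "Rm * (bb \<cdot>\<^sub>m X0) = bb \<cdot>\<^sub>m (Am - (u * of_nat d) \<cdot>\<^sub>m 1\<^sub>m nV)"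
  proof -
    have "Rm * X0 = Am - (u * of_nat d) \<cdot>\<^sub>m 1\<^sub>m nV" unfolding X0_def by (rule F4)
    then show ?thesis unfolding mult_smult_distrib[OF Rm_c X0] by simp
  qed
  also have "1\<^sub>m nV - bb \<cdot>\<^sub>m (Am - (u * of_nat d) \<cdot>\<^sub>m 1\<^sub>m nV) = aa \<cdot>\<^sub>m 1\<^sub>m nV - bb \<cdot>\<^sub>m Am"
  proof -
    have ab: "aa = 1 + bb * (u * of_nat d)" unfolding aa_def bb_def using u1 by (simp add: field_simps power2_eq_square)
    show ?thesis unfolding ab by (intro eq_matI) (auto simp: algebra_simps)
  qed
  also have "det \<dots> = bb ^ nV * poly (char_poly Am) (aa / bb)" by (rule det_ab[OF Am_c b0])
  finally have eq: "det (II - u \<cdot>\<^sub>m Jm) * D = (1 - u^2) ^ nA * (bb ^ nV * poly (char_poly Am) (aa / bb))" .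
  define G where "G = bb ^ nV * poly (char_poly Am) (aa / bb)"
  have "(det (II - u \<cdot>\<^sub>m Jm) * D) ^ 2 = ((1 - u^2) ^ nA * G) ^ 2" using eq unfolding G_def by simp
  then have "(1 - u^2) ^ nA * D ^ 2 = (1 - u^2) ^ nA * ((1 - u^2) ^ nA * G ^ 2)"
    unfolding power_mult_distrib det_J by (simp add: power2_eq_square algebra_simps)
  then have D2: "D ^ 2 = (1 - u^2) ^ nA * G ^ 2" using u1 by simp
  have "poly (char_poly Pn) x = x ^ nA * D" unfolding D using x by (simp add: power_one_over field_simps)
  then have "poly (char_poly Pn) x ^ 2 = x ^ (2 * nA) * D ^ 2"
    by (simp add: power_mult_distrib power_mult[symmetric] mult.commute[of 2])
  then show ?thesis unfolding D2 G_def Pn_def by (simp add: algebra_simps)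
qed

end

context rgraph begin

lemma nA_ge: "2 * nV \<le> nA" using nA_eq d3 by simp

lemma pn_poly:
  assumes cp: "char_poly Am = (\<Prod>mu\<leftarrow>mus. [:- complex_of_real mu, 1:])" and len: "length mus = nV"
  defines "cc \<equiv> of_nat d - (1::complex)"
  shows "char_poly (arc_matrix V E (P_nb E)) ^ 2
    = [:- (1 / cc^2), 0, 1:] ^ (nA - 2 * nV) * (\<Prod>mu\<leftarrow>mus. [:1 / cc, - (complex_of_real mu / cc), 1:]) ^ 2"
proof (rule poly_eq_inf[of "UNIV - {0, 1/cc, -1/cc}"])
  show "infinite (UNIV - {0, 1/cc, -1/cc})" by (simp add: infinite_UNIV_char_0)
  fix x assume xS: "x \<in> UNIV - {0, 1/cc, -1/cc}"
  have cc: "cc \<noteq> 0" unfolding cc_def using d3 by simp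
  have x: "x \<noteq> 0" using xS by simp
  define u where "u = 1 / (cc * x)"
  define bb where "bb = u / (1 - u^2)"
  define aa where "aa = 1 + u^2 * of_nat d / (1 - u^2)"
  have u1: "1 - u^2 \<noteq> 0"
  proof
    assume "1 - u^2 = 0"
    then have "(cc * x)^2 = 1" unfolding u_def using cc x by (simp add: field_simps power2_eq_square)
    then have "cc * x = 1 \<or> cc * x = -1" by (simp add: power2_eq_1_iff)
    then have "x = 1/cc \<or> x = -1/cc" using cc by (auto simp: field_simps)
    then show False using xS by auto
  qed
  have nb: "poly (char_poly (arc_matrix V E (P_nb E))) x ^ 2
     = x ^ (2 * nA) * (1 - u^2) ^ nA * (bb ^ nV * poly (char_poly Am) (aa / bb)) ^ 2"
    unfolding u_def bb_def aa_def cc_def by (rule nb_det[OF x u1[unfolded u_def cc_def]])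
  define w where "w = x^2 - 1 / cc^2"
  have W1: "x^2 * (1 - u^2) = w" unfolding w_def u_def using cc x by (simp add: field_simps power2_eq_square)
  have W2: "w * bb = x / cc"
  proof -
    have "w * bb = x^2 * (1 - u^2) * (u / (1 - u^2))" unfolding W1[symmetric] bb_def ..
    also have "\<dots> = x^2 * u" using u1 by simp
    also have "\<dots> = x / cc" unfolding u_def using cc x by (simp add: field_simps power2_eq_square)
    finally show ?thesis .
  qed
  have W3: "aa / bb = cc * x + 1 / x"
  proof -
    have d: "of_nat d = cc + 1" unfolding cc_def by simp
    have u0: "u \<noteq> 0" unfolding u_def using cc x by simp
    have "aa / bb = (1 - u^2 + u^2 * of_nat d) / u" unfolding aa_def bb_def using u1 u0 by (simp add: field_simps)
    also have "\<dots> = 1 / u + u * cc" unfolding d using u0 by (simp add: field_simps power2_eq_square)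
    also have "\<dots> = cc * x + 1 / x" unfolding u_def using cc x by (simp add: field_simps)
    finally show ?thesis .
  qed
  have W4: "x / cc * (cc * x + 1 / x - complex_of_real mu) = x^2 - complex_of_real mu / cc * x + 1 / cc" for mu
    using cc x by (simp add: field_simps power2_eq_square)
  have pA: "poly (char_poly Am) (aa / bb) = prod_list (map (\<lambda>mu. aa / bb - complex_of_real mu) mus)"
    unfolding cp poly_prod_list_map by simp
  have "x ^ (2 * nA) * (1 - u^2) ^ nA = w ^ nA" unfolding W1[symmetric] by (simp add: power_mult power_mult_distrib)
  also have "\<dots> = w ^ (nA - 2 * nV) * (w ^ nV) ^ 2" using nA_ge
    by (simp add: power_add[symmetric] power_mult[symmetric] mult.commute[of nV])
  finally have L1: "x ^ (2 * nA) * (1 - u^2) ^ nA = w ^ (nA - 2 * nV) * (w ^ nV) ^ 2" .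
  have "w ^ nV * (bb ^ nV * poly (char_poly Am) (aa / bb)) = (w * bb) ^ nV * poly (char_poly Am) (aa / bb)"
    by (simp add: power_mult_distrib)
  also have "\<dots> = prod_list (map (\<lambda>mu. (x / cc) * (aa / bb - complex_of_real mu)) mus)"
    unfolding pA W2 prod_list_scale len ..
  also have "\<dots> = prod_list (map (\<lambda>mu. x^2 - complex_of_real mu / cc * x + 1 / cc) mus)"
    unfolding W3 W4 ..
  finally have L2: "w ^ nV * (bb ^ nV * poly (char_poly Am) (aa / bb)) = prod_list (map (\<lambda>mu. x^2 - complex_of_real mu / cc * x + 1 / cc) mus)" .
  have "poly (char_poly (arc_matrix V E (P_nb E)) ^ 2) x = w ^ (nA - 2 * nV) * (w ^ nV * (bb ^ nV * poly (char_poly Am) (aa / bb))) ^ 2"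
    unfolding poly_power nb L1 by (simp add: power_mult_distrib)
  also have "\<dots> = w ^ (nA - 2 * nV) * (prod_list (map (\<lambda>mu. x^2 - complex_of_real mu / cc * x + 1 / cc) mus)) ^ 2"
    unfolding L2 ..
  also have "\<dots> = poly ([:- (1 / cc^2), 0, 1:] ^ (nA - 2 * nV) * (\<Prod>mu\<leftarrow>mus. [:1 / cc, - (complex_of_real mu / cc), 1:]) ^ 2) x"
    unfolding poly_mult poly_power poly_prod_list_map w_def
    by (simp add: algebra_simps power2_eq_square)
  finally show "poly (char_poly (arc_matrix V E (P_nb E)) ^ 2) x = poly ([:- (1 / cc^2), 0, 1:] ^ (nA - 2 * nV) * (\<Prod>mu\<leftarrow>mus. [:1 / cc, - (complex_of_real mu / cc), 1:]) ^ 2) x" .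
qed

end

definition fe :: "nat \<Rightarrow> real \<Rightarrow> real" where
  "fe d mu = (if mu = real d then 0 else real d / (real d - mu))"
definition fq :: "nat \<Rightarrow> real \<Rightarrow> real" where
  "fq d mu = (if mu = real d then (real d - 1) / (real d - 2) else (2 * (real d - 1) - mu) / (real d - mu))"

lemma Re_sum_list_of_real: "sum_list (map (\<lambda>x. complex_of_real (f x)) xs) = complex_of_real (sum_list (map f xs))"
  by (induct xs) auto

lemma char_poly_nz: "A \<in> carrier_mat n n \<Longrightarrow> char_poly A \<noteq> 0"
  using degree_monic_char_poly[of A n] by auto

lemma cnat_ne2: "d \<ge> 3 \<Longrightarrow> (of_nat d :: complex) \<noteq> 2"
proof
  assume "d \<ge> 3" "(of_nat d :: complex) = 2"
  then have "(of_nat d :: complex) = of_nat 2" by simp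
  then have "d = 2" by (simp only: of_nat_eq_iff)
  then show False using \<open>d \<ge> 3\<close> by simp
qed

lemma Sk_fe:
  assumes d: "d \<ge> 3"
  shows "Sk [:- (complex_of_real mu / of_nat d), 1:] = complex_of_real (fe d mu)"
proof -
  have d0: "(of_nat d :: complex) \<noteq> 0" using d by simp
  have e: "complex_of_real mu / of_nat d = 1 \<longleftrightarrow> mu = real d"
  proof
    assume "complex_of_real mu / of_nat d = 1"
    then have "complex_of_real mu = complex_of_real (real d)" using d0 by (simp add: field_simps)
    then show "mu = real d" by (simp only: of_real_eq_iff)
  qed (use d0 in simp)
  show ?thesis
  proof (cases "mu = real d")
    case True then show ?thesis unfolding Sk_linear fe_def using e by simp
  next
    case False
    then have "real d - mu \<noteq> 0" by simp
    then have "complex_of_real (real d - mu) \<noteq> 0" by (metis of_real_eq_0_iff)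
    moreover have "complex_of_real (real d - mu) = of_nat d - complex_of_real mu" by simp
    ultimately have ne: "of_nat d - complex_of_real mu \<noteq> 0" by metis
    show ?thesis unfolding Sk_linear fe_def using e False d0 ne by (simp add: field_simps)
  qed
qed

lemma Sk_fq:
  assumes d: "d \<ge> 3"
  defines "cc \<equiv> of_nat d - (1::complex)"
  shows "Sk [:1 / cc, - (complex_of_real mu / cc), 1:] = complex_of_real (fq d mu)"
proof -
  have cc: "cc \<noteq> 0" "cc \<noteq> 1" unfolding cc_def using d cnat_ne2[OF d] by auto
  obtain a b where q: "[:1 / cc, - (complex_of_real mu / cc), 1:] = [:-a,1:] * [:-b,1:]"
    and s: "a + b = complex_of_real mu / cc" and p: "a * b = 1 / cc"
    using Sk_quadratic[OF cc(1), of "complex_of_real mu"] by auto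
  have Sq: "Sk [:1 / cc, - (complex_of_real mu / cc), 1:] = Sk [:-a,1:] + Sk [:-b,1:]"
    unfolding q by (rule Sk_mult) auto
  have prodab: "(1 - a) * (1 - b) = (of_nat d - complex_of_real mu) / cc"
  proof -
    have "(1 - a) * (1 - b) = 1 - (a + b) + a * b" by (simp add: algebra_simps)
    also have "\<dots> = (of_nat d - complex_of_real mu) / cc" unfolding s p using cc unfolding cc_def
      by (simp add: field_simps)
    finally show ?thesis .
  qed
  have c2: "complex_of_real (real d - 2) = cc - 1" unfolding cc_def by simp
  show ?thesis
  proof (cases "mu = real d")
    case True
    then have "(1 - a) * (1 - b) = 0" using prodab by simp
    then have ab1: "a = 1 \<or> b = 1" by simp
    have val: "1 / (1 - 1 / cc) = complex_of_real (fq d mu)"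
    proof -
      have "1 / (1 - 1 / cc) = cc / (cc - 1)" using cc by (simp add: field_simps)
      also have "\<dots> = complex_of_real ((real d - 1) / (real d - 2))" unfolding cc_def by simp
      finally show ?thesis unfolding fq_def using True by simp
    qed
    from ab1 show ?thesis
    proof
      assume a: "a = 1"
      then have "b = 1 / cc" using p by simp
      then show ?thesis unfolding Sq Sk_linear using a cc val by simp
    next
      assume b: "b = 1"
      then have "a = 1 / cc" using p by simp
      then show ?thesis unfolding Sq Sk_linear using b cc val by simp
    qed
  next
    case False
    then have "real d - mu \<noteq> 0" by simp
    then have "complex_of_real (real d - mu) \<noteq> 0" by (metis of_real_eq_0_iff)
    moreover have "complex_of_real (real d - mu) = of_nat d - complex_of_real mu" by simp
    ultimately have ne: "of_nat d - complex_of_real mu \<noteq> 0" by metis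
    then have "(1 - a) * (1 - b) \<noteq> 0" using prodab cc by simp
    then have a1: "1 - a \<noteq> 0" and b1: "1 - b \<noteq> 0" by auto
    then have "a \<noteq> 1" "b \<noteq> 1" by auto
    then have "Sk [:1 / cc, - (complex_of_real mu / cc), 1:] = 1 / (1 - a) + 1 / (1 - b)"
      unfolding Sq Sk_linear by simp
    also have "\<dots> = (2 - (a + b)) / ((1 - a) * (1 - b))" using a1 b1 by (simp add: field_simps)
    also have "\<dots> = (2 * cc - complex_of_real mu) / (of_nat d - complex_of_real mu)"
      unfolding s prodab using cc ne by (simp add: field_simps)
    also have "\<dots> = complex_of_real (fq d mu)" unfolding fq_def cc_def using False by simp
    finally show ?thesis .
  qed
qed

lemma Sk_w:
  assumes d: "d \<ge> 3"
  defines "cc \<equiv> of_nat d - (1::complex)"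
  shows "Sk [:- (1 / cc^2), 0, 1:] = complex_of_real ((real d - 1) / (real d - 2) + (real d - 1) / real d)"
proof -
  have cc: "cc \<noteq> 0" "cc \<noteq> 1" "cc \<noteq> -1" unfolding cc_def using d cnat_ne2[OF d] by auto
  have q: "[:- (1 / cc^2), 0, 1:] = [:-(1/cc),1:] * [:-(-(1/cc)),1:]"
    by (simp add: power2_eq_square)
  have "Sk [:- (1 / cc^2), 0, 1:] = Sk [:-(1/cc),1:] + Sk [:-(-(1/cc)),1:]"
    unfolding q by (rule Sk_mult) auto
  also have "\<dots> = 1 / (1 - 1/cc) + 1 / (1 + 1/cc)" unfolding Sk_linear using cc by (auto simp: field_simps)
  also have "\<dots> = cc / (cc - 1) + cc / (cc + 1)" using cc by (simp add: field_simps)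
  also have "\<dots> = complex_of_real ((real d - 1) / (real d - 2) + (real d - 1) / real d)"
    unfolding cc_def by simp
  finally show ?thesis .
qed


context rgraph begin

lemma kemeny_values:
  assumes cp: "char_poly Am = (\<Prod>mu\<leftarrow>mus. [:- complex_of_real mu, 1:])" and len: "length mus = nV"
  shows "kemeny_edge V E = real (nA - nV) + sum_list (map (fe d) mus)"
    and "kemeny_nb V E = real (nA - 2 * nV) / 2 * ((real d - 1) / (real d - 2) + (real d - 1) / real d)
            + sum_list (map (fq d) mus)"
proof -
  define pe where "pe = char_poly (arc_matrix V E (P_edge E))"
  have pe0: "pe \<noteq> 0" unfolding pe_def by (rule char_poly_nz[OF Pe_c])
  have X0: "[:0,1:] ^ j \<noteq> (0 :: complex poly)" for j by simp
  have P0: "(\<Prod>mu\<leftarrow>mus. [:- (complex_of_real mu / of_nat d), 1:]) \<noteq> 0"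
  proof -
    have "monic (\<Prod>mu\<leftarrow>mus. [:- (complex_of_real mu / of_nat d), 1:])" by (rule monic_prod_list, auto)
    then show ?thesis by auto
  qed
  have "Sk (pe * [:0,1:] ^ nV) = Sk ([:0,1:] ^ nA * (\<Prod>mu\<leftarrow>mus. [:- (complex_of_real mu / of_nat d), 1:]))"
    unfolding pe_def using pe_poly[OF cp len] by simp
  then have "Sk pe + of_nat nV = of_nat nA + sum_list (map (\<lambda>mu. Sk [:- (complex_of_real mu / of_nat d), 1:]) mus)"
    unfolding Sk_mult[OF pe0 X0] Sk_mult[OF X0 P0] Sk_monom
    by (subst (asm) Sk_prod_list) (auto simp: comp_def)
  also have "sum_list (map (\<lambda>mu. Sk [:- (complex_of_real mu / of_nat d), 1:]) mus) = complex_of_real (sum_list (map (fe d) mus))"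
    unfolding Sk_fe[OF d3] Re_sum_list_of_real ..
  finally have "Sk pe = of_nat nA - of_nat nV + complex_of_real (sum_list (map (fe d) mus))"
    by (simp add: algebra_simps)
  moreover have "of_nat nA - of_nat nV = complex_of_real (real (nA - nV))" using nA_ge by (simp add: of_nat_diff)
  ultimately show "kemeny_edge V E = real (nA - nV) + sum_list (map (fe d) mus)"
    unfolding kemeny_edge_def kemeny_Sk pe_def[symmetric] by simp
next
  define cc where "cc = of_nat d - (1::complex)"
  define pn where "pn = char_poly (arc_matrix V E (P_nb E))"
  have pn0: "pn \<noteq> 0" unfolding pn_def by (rule char_poly_nz[OF Pn_c])
  have w0: "[:- (1 / cc^2), 0, 1:] \<noteq> 0" by simp
  have Q0: "(\<Prod>mu\<leftarrow>mus. [:1 / cc, - (complex_of_real mu / cc), 1:]) \<noteq> 0"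
  proof -
    have "monic (\<Prod>mu\<leftarrow>mus. [:1 / cc, - (complex_of_real mu / cc), 1:])" by (rule monic_prod_list, auto)
    then show ?thesis by auto
  qed
  have "Sk (pn ^ 2) = Sk ([:- (1 / cc^2), 0, 1:] ^ (nA - 2 * nV) * (\<Prod>mu\<leftarrow>mus. [:1 / cc, - (complex_of_real mu / cc), 1:]) ^ 2)"
    unfolding pn_def cc_def using pn_poly[OF cp len] by simp
  then have "2 * Sk pn = of_nat (nA - 2 * nV) * Sk [:- (1 / cc^2), 0, 1:]
      + 2 * sum_list (map (\<lambda>mu. Sk [:1 / cc, - (complex_of_real mu / cc), 1:]) mus)"
    unfolding Sk_power[OF pn0] Sk_mult[OF power_not_zero[OF w0] power_not_zero[OF Q0]] Sk_power[OF w0] Sk_power[OF Q0]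
    by (subst (asm) Sk_prod_list) (auto simp: comp_def)
  also have "sum_list (map (\<lambda>mu. Sk [:1 / cc, - (complex_of_real mu / cc), 1:]) mus) = complex_of_real (sum_list (map (fq d) mus))"
    unfolding cc_def Sk_fq[OF d3] Re_sum_list_of_real ..
  also have "Sk [:- (1 / cc^2), 0, 1:] = complex_of_real ((real d - 1) / (real d - 2) + (real d - 1) / real d)"
    unfolding cc_def by (rule Sk_w[OF d3])
  finally have "Sk pn = complex_of_real (real (nA - 2 * nV) / 2 * ((real d - 1) / (real d - 2) + (real d - 1) / real d)
            + sum_list (map (fq d) mus))"
    by (simp add: field_simps)
  then show "kemeny_nb V E = real (nA - 2 * nV) / 2 * ((real d - 1) / (real d - 2) + (real d - 1) / real d)
            + sum_list (map (fq d) mus)"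
    unfolding kemeny_nb_def kemeny_Sk pn_def[symmetric] by (simp only: Re_complex_of_real)
qed

end

lemma sum_list_split_eq:
  "sum_list (map f xs) = sum_list (map f (filter (\<lambda>x. x = a) xs)) + sum_list (map f (filter (\<lambda>x. x \<noteq> a) xs))"
  for f :: "'a \<Rightarrow> 'b :: comm_monoid_add"
  by (induct xs) (auto simp: algebra_simps)

lemma sl_aff: "sum_list (map (\<lambda>x. 1 + c * g x) xs) = real (length xs) + c * sum_list (map g xs)"
  by (induct xs) (auto simp: algebra_simps)

lemma sl2: "(D::real) \<noteq> 0 \<Longrightarrow> sum_list (map (\<lambda>x. 2 - (D - x) / D) xs) = 2 * real (length xs) - (D * real (length xs) - sum_list xs) / D"
  by (induct xs) (auto simp: field_simps)

lemma filter_single: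
  assumes "length (filter (\<lambda>x. x = a) xs) = 1"
  shows "filter (\<lambda>x. x = a) xs = [a]"
proof -
  obtain y where y: "filter (\<lambda>x. x = a) xs = [y]" using assms by (cases "filter (\<lambda>x. x = a) xs") auto
  then have "y \<in> set (filter (\<lambda>x. x = a) xs)" by simp
  then have "y = a" by simp
  then show ?thesis using y by simp
qed

lemma ratio_bound:
  fixes mus :: "real list" and n d :: nat
  assumes d3: "d \<ge> 3" and len: "length mus = n" and le: "\<And>mu. mu \<in> set mus \<Longrightarrow> mu \<le> real d"
    and sm: "sum_list mus = 0" and cnt: "length (filter (\<lambda>mu. mu = real d) mus) = 1"
  defines "Ke \<equiv> real (n * d - n) + sum_list (map (fe d) mus)"
  defines "Kn \<equiv> real (n * d - 2 * n) / 2 * ((real d - 1) / (real d - 2) + (real d - 1) / real d) + sum_list (map (fq d) mus)"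
  shows "Ke \<ge> real n * real d - 2"
    and "Kn \<le> (1 - 1 / (real d)^2) * Ke + (2 * (2 * real d - 1) / (real d)^2 + 1 / (real d - 2))"
proof -
  define D where "D = real d"
  have D3: "D \<ge> 3" unfolding D_def using d3 by simp
  define L where "L = filter (\<lambda>mu. mu \<noteq> D) mus"
  have fd: "filter (\<lambda>mu. mu = D) mus = [D]" unfolding D_def by (rule filter_single[OF cnt])
  have lenL: "length L = n - 1"
  proof -
    have "length (filter (\<lambda>mu. mu = D) mus) + length L = length mus"
      unfolding L_def by (rule sum_length_filter_compl)
    then show ?thesis using fd len by simp
  qed
  have n1: "n \<ge> 1" using cnt len by (metis length_filter_le One_nat_def)
  have lenLr: "real (length L) = real n - 1" using lenL n1 by simp
  have split: "sum_list (map f mus) = f D + sum_list (map f L)" for f :: "real \<Rightarrow> real"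
    using sum_list_split_eq[of f mus D] fd unfolding L_def by simp
  have sL: "sum_list L = - D" using split[of "\<lambda>x. x"] sm by simp
  have ltL: "mu < D" if "mu \<in> set L" for mu using that le unfolding L_def D_def by fastforce
  define T where "T = sum_list (map (\<lambda>mu. D / (D - mu)) L)"
  have Tfe: "sum_list (map (fe d) mus) = T"
  proof -
    have "sum_list (map (fe d) L) = T" unfolding T_def
      by (rule arg_cong[where f=sum_list], rule map_cong, simp) (auto simp: fe_def D_def L_def)
    then show ?thesis using split[of "fe d"] by (simp add: fe_def D_def)
  qed
  have Tfq: "sum_list (map (fq d) mus) = (D - 1) / (D - 2) + (real n - 1) + (D - 2) / D * T"
  proof -
    have "sum_list (map (fq d) L) = sum_list (map (\<lambda>mu. 1 + (D - 2) / D * (D / (D - mu))) L)"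
    proof (rule arg_cong[where f=sum_list], rule map_cong, simp)
      fix mu assume mu: "mu \<in> set L"
      then have "D - mu \<noteq> 0" using ltL by fastforce
      moreover have "mu \<noteq> D" using mu ltL by fastforce
      ultimately show "fq d mu = 1 + (D - 2) / D * (D / (D - mu))" unfolding fq_def D_def[symmetric]
        using D3 by (simp add: field_simps)
    qed
    also have "\<dots> = real (length L) + (D - 2) / D * T"
      unfolding T_def by (rule sl_aff)
    finally show ?thesis using split[of "fq d"] lenLr by (simp add: fq_def D_def)
  qed
  have Tge: "T \<ge> real n - 2"
  proof -
    have "T \<ge> sum_list (map (\<lambda>mu. 2 - (D - mu) / D) L)" unfolding T_def
    proof (rule sum_list_mono)
      fix mu assume "mu \<in> set L"
      then have p: "D - mu > 0" using ltL by fastforce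
      define t where "t = (D - mu) / D"
      have t: "t > 0" unfolding t_def using p D3 by simp
      have "D / (D - mu) = 1 / t" unfolding t_def by simp
      moreover have "1 / t \<ge> 2 - t"
      proof -
        have "(t - 1)^2 \<ge> 0" by simp
        then have "1 \<ge> (2 - t) * t" by (simp add: power2_eq_square algebra_simps)
        then show ?thesis using t by (simp add: field_simps)
      qed
      ultimately show "2 - (D - mu) / D \<le> D / (D - mu)" unfolding t_def by simp
    qed
    also have "sum_list (map (\<lambda>mu. 2 - (D - mu) / D) L) = 2 * real (length L) - (D * real (length L) - sum_list L) / D"
      by (rule sl2, insert D3, simp)
    also have "\<dots> = real n - 2" unfolding sL lenLr using D3 by (simp add: field_simps)
    finally show ?thesis .
  qed
  have nd1: "real (n * d - n) = real n * (D - 1)" unfolding D_def using d3 by (simp add: of_nat_diff algebra_simps)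
  have nd2: "real (n * d - 2 * n) = real n * (D - 2)" unfolding D_def using d3 by (simp add: of_nat_diff algebra_simps)
  have Ke: "Ke = real n * (D - 1) + T" unfolding Ke_def nd1 Tfe ..
  have Kn: "Kn = real n * (D - 2) / 2 * ((D - 1) / (D - 2) + (D - 1) / D) + ((D - 1) / (D - 2) + (real n - 1) + (D - 2) / D * T)"
    unfolding Kn_def nd2 Tfq D_def ..
  show "Ke \<ge> real n * real d - 2" unfolding Ke D_def[symmetric] using Tge by (simp add: algebra_simps)
  have id: "(1 - 1 / D^2) * Ke - Kn = (2 * D - 1) / D^2 * (T - real n) - 1 / (D - 2)"
  proof -
    have D0: "D \<noteq> 0" and D2: "D - 2 \<noteq> 0" using D3 by auto
    have a1: "(D - 2) / 2 * ((D - 1) / (D - 2) + (D - 1) / D) = (D - 1)^2 / D"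
      using D0 D2 by (simp add: field_simps power2_eq_square)
    have a2: "(D - 1) / (D - 2) = 1 + 1 / (D - 2)" using D2 by (simp add: field_simps)
    have Kn2: "Kn = real n * (D - 1)^2 / D + real n + 1 / (D - 2) + (D - 2) / D * T"
    proof -
      have "Kn = real n * ((D - 2) / 2 * ((D - 1) / (D - 2) + (D - 1) / D)) + ((D - 1) / (D - 2) + (real n - 1) + (D - 2) / D * T)"
        unfolding Kn by simp
      also have "\<dots> = real n * (D - 1)^2 / D + real n + 1 / (D - 2) + (D - 2) / D * T"
        unfolding a1 by (simp add: a2)
      finally show ?thesis .
    qed
    have "(1 - 1 / D^2) * Ke - Kn = ((D^2 - 1) * (real n * (D - 1) + T) - real n * (D - 1)^2 * D - real n * D^2 - (D - 2) * D * T) / D^2 - 1 / (D - 2)"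
      unfolding Ke Kn2 using D0 by (simp add: field_simps power2_eq_square)
    also have "(D^2 - 1) * (real n * (D - 1) + T) - real n * (D - 1)^2 * D - real n * D^2 - (D - 2) * D * T = (2 * D - 1) * (T - real n)"
      by (simp add: algebra_simps power2_eq_square)
    finally show ?thesis by simp
  qed
  have "(2 * D - 1) / D^2 * (T - real n) \<ge> (2 * D - 1) / D^2 * (-2)"
    by (rule mult_left_mono, insert Tge D3, auto)
  moreover have e: "(2 * D - 1) / D^2 * (-2) = - (2 * (2 * D - 1) / D^2)" by simp
  ultimately show "Kn \<le> (1 - 1 / (real d)^2) * Ke + (2 * (2 * real d - 1) / (real d)^2 + 1 / (real d - 2))"
    using id unfolding D_def[symmetric] by linarith
qed


context rgraph begin

lemma ratio_single:
  "kemeny_nb V E / kemeny_edge V E \<le> (1 - 1 / (real d)^2) + (2 * (2 * real d - 1) / (real d)^2 + 1 / (real d - 2)) / real nV"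
proof -
  obtain mus where cp: "char_poly Am = (\<Prod>mu\<leftarrow>mus. [:- complex_of_real mu, 1:])"
    and len: "length mus = nV" and le: "\<And>mu. mu \<in> set mus \<Longrightarrow> mu \<le> real d"
    and sm: "sum_list mus = 0" and cnt: "length (filter (\<lambda>mu. mu = real d) mus) = 1"
    using spectrum by blast
  define C where "C = 2 * (2 * real d - 1) / (real d)^2 + 1 / (real d - 2)"
  have C: "C > 0" unfolding C_def using d3 by (auto intro!: add_pos_pos divide_pos_pos)
  have Ke: "kemeny_edge V E = real (nV * d - nV) + sum_list (map (fe d) mus)"
    using kemeny_values(1)[OF cp len] nA_eq by simp
  have Kn: "kemeny_nb V E = real (nV * d - 2 * nV) / 2 * ((real d - 1) / (real d - 2) + (real d - 1) / real d)
            + sum_list (map (fq d) mus)"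
    using kemeny_values(2)[OF cp len] nA_eq by simp
  note rb = ratio_bound[OF d3 len le sm cnt, folded Ke Kn C_def]
  have n1: "real nV \<ge> 1" using nV_pos by simp
  have "real nV * real d - 2 \<ge> real nV" using n1 d3
  proof -
    have "real nV * real d \<ge> real nV * 3" using d3 by (intro mult_left_mono) auto
    then show ?thesis using n1 by linarith
  qed
  then have Kge: "kemeny_edge V E \<ge> real nV" using rb(1) by linarith
  then have Kpos: "kemeny_edge V E > 0" using n1 by linarith
  have "kemeny_nb V E / kemeny_edge V E \<le> ((1 - 1 / (real d)^2) * kemeny_edge V E + C) / kemeny_edge V E"
    by (rule divide_right_mono[OF rb(2) less_imp_le[OF Kpos]])
  also have "\<dots> = (1 - 1 / (real d)^2) + C / kemeny_edge V E" using Kpos by (simp add: field_simps)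
  also have "C / kemeny_edge V E \<le> C / real nV"
  proof -
    have "real nV > 0" using n1 by simp
    then show ?thesis by (rule divide_left_mono[OF Kge less_imp_le[OF C] mult_pos_pos[OF Kpos]])
  qed
  finally show ?thesis unfolding C_def by simp
qed

end

theorem theorem3p7:
  fixes d :: nat and V :: "nat \<Rightarrow> nat set" and E :: "nat \<Rightarrow> nat \<Rightarrow> nat \<Rightarrow> bool"
  assumes "d \<ge> 3"
    and "\<And>k. simple_graph (V k) (E k)"
    and "\<And>k. connected_graph (V k) (E k)"
    and "\<And>k. regular (V k) (E k) d"
    and "filterlim (\<lambda>k. card (V k)) at_top sequentially"
  shows "limsup (\<lambda>k. ereal (kemeny_nb (V k) (E k) / kemeny_edge (V k) (E k)))
           \<le> ereal (1 - 1 / (real d)^2)"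
proof -
  define C where "C = 2 * (2 * real d - 1) / (real d)^2 + 1 / (real d - 2)"
  define g where "g k = (1 - 1 / (real d)^2) + C / real (card (V k))" for k
  have rg: "rgraph (V k) (E k) d" for k using assms by (unfold_locales) auto
  have le: "kemeny_nb (V k) (E k) / kemeny_edge (V k) (E k) \<le> g k" for k
    using rgraph.ratio_single[OF rg[of k]] unfolding g_def C_def rgraph.nV_def[OF rg[of k]] .
  have lim_card: "filterlim (\<lambda>k. real (card (V k))) at_top sequentially"
    by (rule filterlim_compose[OF filterlim_real_sequentially assms(5)])
  have "((\<lambda>k. C / real (card (V k))) \<longlongrightarrow> 0) sequentially"
    by (rule tendsto_divide_0[OF tendsto_const filterlim_at_top_imp_at_infinity[OF lim_card]])
  then have "(g \<longlongrightarrow> (1 - 1 / (real d)^2) + 0) sequentially"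
    unfolding g_def by (intro tendsto_add tendsto_const)
  then have "((\<lambda>k. ereal (g k)) \<longlongrightarrow> ereal (1 - 1 / (real d)^2)) sequentially"
    by (intro tendsto_ereal) simp
  then have lg: "limsup (\<lambda>k. ereal (g k)) = ereal (1 - 1 / (real d)^2)"
    by (rule lim_imp_Limsup[OF trivial_limit_sequentially])
  have "limsup (\<lambda>k. ereal (kemeny_nb (V k) (E k) / kemeny_edge (V k) (E k))) \<le> limsup (\<lambda>k. ereal (g k))"
    by (rule Limsup_mono) (use le in auto)
  then show ?thesis unfolding lg .
qed


end
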